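(* Let $m,n\in\mathbb{Z}_{\ge0}$ and $N\in\mathbb{Z}_{>0}$. If $E_4^{\,m}E_6^{\,n}$ satisfies a monic MLDE of weight $4m+6n$ and order $N$, then $N\ge\max\{m,n\}+1$.
   Context: $q=e^{2\pi iz}$, $f'=\frac{1}{2\pi i}\frac{df}{dz}$; $E_2,E_4,E_6$ are the Eisenstein series with constant term $1$, and $\mathcal{M}_w$ is the space of holomorphic modular forms of weight $w$ on $\mathrm{SL}(2,\mathbb{Z})$. For $k\in\mathbb{R}$, $D_kf=f'-\frac{k}{12}E_2f$, $D_k^{(0)}=\mathrm{id}$, $D_k^{(j)}=D_{k+2j-2}\circ\cdots\circ D_k$. A monic MLDE of weight $k$ and order $N$ is an equation $(D_k^{(N)}+g_1D_k^{(N-1)}+\cdots+g_N)f=0$ with $g_i\in\mathcal{M}_{2i}$. *)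

theory Defs
  imports "HOL-Complex_Analysis.Complex_Analysis"
begin

definition upper_half_plane :: "complex set" where
  "upper_half_plane = {z. Im z > 0}"

definition qvar :: "complex \<Rightarrow> complex" where
  "qvar z = exp (2 * of_real pi * \<i> * z)"

text \<open>Divisor sum sigma_k(n) (used only for n \<ge> 1).\<close>
definition divsum :: "nat \<Rightarrow> nat \<Rightarrow> nat" where
  "divsum k n = (\<Sum>d | d dvd n. d ^ k)"

definition eis2 :: "complex \<Rightarrow> complex" where
  "eis2 z = 1 - 24 * (\<Sum>n. of_nat (divsum 1 (Suc n)) * qvar z ^ Suc n)"

definition eis4 :: "complex \<Rightarrow> complex" where
  "eis4 z = 1 + 240 * (\<Sum>n. of_nat (divsum 3 (Suc n)) * qvar z ^ Suc n)"

definition eis6 :: "complex \<Rightarrow> complex" where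
  "eis6 z = 1 - 504 * (\<Sum>n. of_nat (divsum 5 (Suc n)) * qvar z ^ Suc n)"

definition mderiv :: "(complex \<Rightarrow> complex) \<Rightarrow> complex \<Rightarrow> complex" where
  "mderiv f z = deriv f z / (2 * of_real pi * \<i>)"

definition serre_D :: "real \<Rightarrow> (complex \<Rightarrow> complex) \<Rightarrow> complex \<Rightarrow> complex" where
  "serre_D k f = (\<lambda>z. mderiv f z - of_real k / 12 * eis2 z * f z)"

fun serre_iter :: "real \<Rightarrow> nat \<Rightarrow> (complex \<Rightarrow> complex) \<Rightarrow> complex \<Rightarrow> complex" where
  "serre_iter k 0 f = f"
| "serre_iter k (Suc j) f = serre_D (k + 2 * real j) (serre_iter k j f)"

definition modular_forms :: "int \<Rightarrow> (complex \<Rightarrow> complex) set" where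
  "modular_forms w = {f. f holomorphic_on upper_half_plane \<and>
     (\<forall>a b c d :: int. a * d - b * c = 1 \<longrightarrow>
        (\<forall>z\<in>upper_half_plane.
           f ((of_int a * z + of_int b) / (of_int c * z + of_int d))
             = (of_int c * z + of_int d) powi w * f z)) \<and>
     (\<exists>C. \<forall>z. 1 \<le> Im z \<longrightarrow> cmod (f z) \<le> C)}"

definition satisfies_monic_MLDE :: "real \<Rightarrow> nat \<Rightarrow> (complex \<Rightarrow> complex) \<Rightarrow> bool" where
  "satisfies_monic_MLDE k N f \<longleftrightarrow>
     (\<exists>g :: nat \<Rightarrow> complex \<Rightarrow> complex.
        (\<forall>i\<in>{1..N}. g i \<in> modular_forms (2 * int i)) \<and>
        (\<forall>z\<in>upper_half_plane.
           serre_iter k N f z + (\<Sum>i=1..N. g i z * serre_iter k (N - i) f z) = 0))"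

end

theory Submission
  imports Defs "HOL-Real_Asymp.Real_Asymp" "HOL-Computational_Algebra.Polynomial"
begin


lemma summable_Suc_pow_geom:
  fixes w :: "'a::{real_normed_field,banach}"
  assumes "norm w < 1"
  shows "summable (\<lambda>n. of_nat (Suc n) ^ j * w ^ n)"
  using assms
proof (induction j arbitrary: w)
  case 0
  then show ?case by (simp add: summable_geometric)
next
  case (Suc j)
  have s: "\<And>x::'a. norm x < 1 \<Longrightarrow> summable (\<lambda>n. of_nat n ^ j * x ^ n)"
  proof -
    fix x :: 'a assume x: "norm x < 1"
    have "summable (\<lambda>n. x * (of_nat (Suc n) ^ j * x ^ n))"
      using Suc.IH[OF x] by (rule summable_mult)
    then have "summable (\<lambda>n. of_nat (Suc n) ^ j * x ^ Suc n)"
      by (simp add: algebra_simps)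
    then show "summable (\<lambda>n. of_nat n ^ j * x ^ n)"
      using summable_Suc_iff[of "\<lambda>n. of_nat n ^ j * x ^ n"] by simp
  qed
  have "summable (\<lambda>n. diffs (\<lambda>n. of_nat n ^ j) n * w ^ n)"
    by (rule termdiff_converges[OF Suc.prems s])
  then show ?case by (simp add: diffs_def)
qed

lemma summable_pow_geom:
  fixes w :: "'a::{real_normed_field,banach}"
  assumes "norm w < 1"
  shows "summable (\<lambda>n. of_nat n ^ j * w ^ n)"
proof -
  have "summable (\<lambda>n. w * (of_nat (Suc n) ^ j * w ^ n))"
    using summable_Suc_pow_geom[OF assms] by (rule summable_mult)
  then have "summable (\<lambda>n. of_nat (Suc n) ^ j * w ^ Suc n)"
    by (simp add: algebra_simps)
  then show ?thesis
    using summable_Suc_iff[of "\<lambda>n. of_nat n ^ j * w ^ n"] by simp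
qed

definition PS :: "nat \<Rightarrow> complex \<Rightarrow> complex" where
  "PS j w = (\<Sum>r. of_nat r ^ j * w ^ r)"

lemma PS_deriv:
  assumes "norm w < 1"
  shows "(PS j has_field_derivative (\<Sum>n. of_nat (Suc n) ^ Suc j * w ^ n)) (at w)"
proof -
  have "((\<lambda>w. \<Sum>n. of_nat n ^ j * w ^ n) has_field_derivative
          (\<Sum>n. diffs (\<lambda>n. of_nat n ^ j) n * w ^ n)) (at w)"
    by (rule termdiffs_strong'[of 1]) (auto intro: summable_pow_geom assms)
  then show ?thesis by (simp add: diffs_def PS_def[abs_def])
qed

lemma PS_shift:
  assumes "norm w < 1"
  shows "w * (\<Sum>n. of_nat (Suc n) ^ Suc j * w ^ n) = PS (Suc j) w"
proof -
  have "w * (\<Sum>n. of_nat (Suc n) ^ Suc j * w ^ n) = (\<Sum>n. w * (of_nat (Suc n) ^ Suc j * w ^ n))"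
    using summable_Suc_pow_geom[OF assms] by (rule suminf_mult[symmetric])
  also have "\<dots> = (\<Sum>n. of_nat (Suc n) ^ Suc j * w ^ Suc n)"
    by (simp add: algebra_simps)
  also have "\<dots> = PS (Suc j) w"
    unfolding PS_def using suminf_split_head[OF summable_pow_geom[OF assms, of "Suc j"]] by simp
  finally show ?thesis .
qed

lemma norm_qvar: "norm (qvar z) = exp (-2 * pi * Im z)"
  by (simp add: qvar_def norm_exp_eq_Re)

lemma norm_qvar_lt1: "Im z > 0 \<Longrightarrow> norm (qvar z) < 1"
  by (simp add: norm_qvar)

lemma qvar_deriv [derivative_intros]:
  "(qvar has_field_derivative (2 * of_real pi * \<i> * qvar z)) (at z)"
  unfolding qvar_def[abs_def] by (auto intro!: derivative_eq_intros)

lemma qvar_mult_nat: "qvar (of_nat m * z) = qvar z ^ m"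
proof -
  have "qvar (of_nat m * z) = exp (of_nat m * (2 * of_real pi * \<i> * z))"
    by (simp add: qvar_def algebra_simps)
  also have "\<dots> = qvar z ^ m" by (simp add: exp_of_nat_mult qvar_def)
  finally show ?thesis .
qed

definition Phi :: "nat \<Rightarrow> complex \<Rightarrow> complex" where
  "Phi j z = PS j (qvar z)"

lemma Phi_deriv:
  assumes "Im z > 0"
  shows "(Phi j has_field_derivative (2 * of_real pi * \<i> * Phi (Suc j) z)) (at z)"
proof -
  have q: "norm (qvar z) < 1" using assms by (rule norm_qvar_lt1)
  have "((\<lambda>z. PS j (qvar z)) has_field_derivative
          (\<Sum>n. of_nat (Suc n) ^ Suc j * qvar z ^ n) * (2 * of_real pi * \<i> * qvar z)) (at z)"
    by (rule DERIV_chain2[OF PS_deriv[OF q] qvar_deriv])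
  also have "(\<Sum>n. of_nat (Suc n) ^ Suc j * qvar z ^ n) * (2 * of_real pi * \<i> * qvar z)
      = 2 * of_real pi * \<i> * (qvar z * (\<Sum>n. of_nat (Suc n) ^ Suc j * qvar z ^ n))"
    by (simp add: algebra_simps)
  also have "\<dots> = 2 * of_real pi * \<i> * Phi (Suc j) z"
    unfolding Phi_def using PS_shift[OF q, of j] by simp
  finally show ?thesis by (simp add: Phi_def[abs_def])
qed

lemma DERIV_unique_open:
  assumes "open S" "z \<in> S" "\<And>w. w \<in> S \<Longrightarrow> f w = g w"
    and "(f has_field_derivative f') (at z)" "(g has_field_derivative g') (at z)"
  shows "f' = g'"
proof -
  have "(g has_field_derivative f') (at z)"
    by (rule has_field_derivative_transform_within_open[OF assms(4,1,2)]) (use assms(3) in auto)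
  then show ?thesis using assms(5) DERIV_unique by blast
qed

lemma int_has_sum_split:
  fixes f :: "int \<Rightarrow> 'a::banach"
  assumes "summable (\<lambda>n. norm (f (int n)))" "summable (\<lambda>n. norm (f (- int n - 1)))"
  shows "(f has_sum ((\<Sum>n. f (int n)) + (\<Sum>n. f (- int n - 1)))) UNIV"
proof -
  have a: "((\<lambda>n. f (int n)) has_sum (\<Sum>n. f (int n))) UNIV"
    by (rule norm_summable_imp_has_sum[OF assms(1) summable_sums[OF summable_norm_cancel[OF assms(1)]]])
  have b: "((\<lambda>n. f (- int n - 1)) has_sum (\<Sum>n. f (- int n - 1))) UNIV"
    by (rule norm_summable_imp_has_sum[OF assms(2) summable_sums[OF summable_norm_cancel[OF assms(2)]]])
  have a': "(f has_sum (\<Sum>n. f (int n))) (range int)"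
    using a by (subst has_sum_reindex) (auto simp: o_def inj_on_def)
  have b': "(f has_sum (\<Sum>n. f (- int n - 1))) (range (\<lambda>n. - int n - 1))"
    using b by (subst has_sum_reindex) (auto simp: o_def inj_on_def)
  have u: "range int \<union> range (\<lambda>n. - int n - 1) = (UNIV :: int set)"
  proof (intro set_eqI iffI)
    fix x :: int
    show "x \<in> range int \<union> range (\<lambda>n. - int n - 1)"
    proof (cases "x \<ge> 0")
      case True then show ?thesis by (auto intro!: image_eqI[of x int "nat x"])
    next
      case False then show ?thesis
        by (auto intro!: image_eqI[of x "\<lambda>n. - int n - 1" "nat (- x - 1)"])
    qed
  qed auto
  have "(f has_sum ((\<Sum>n. f (int n)) + (\<Sum>n. f (- int n - 1)))) (range int \<union> range (\<lambda>n. - int n - 1))"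
    by (rule has_sum_Un_disjoint[OF a' b']) auto
  then show ?thesis by (simp only: u)
qed

lemma summable_norm_inv_pow:
  fixes z :: complex
  assumes "k \<ge> 2"
  shows "summable (\<lambda>n. norm (inverse ((z + of_nat n) ^ k)))"
proof (rule summable_comparison_test_ev)
  show "summable (\<lambda>n. 2 ^ k * inverse (real n ^ k))"
    using inverse_power_summable[of k] assms by (intro summable_mult) auto
  have "eventually (\<lambda>n. real n > 2 * norm z) sequentially"
    by real_asymp
  then show "eventually (\<lambda>n. norm (norm (inverse ((z + of_nat n) ^ k))) \<le> 2 ^ k * inverse (real n ^ k)) sequentially"
  proof eventually_elim
    case (elim n)
    have "norm (of_nat n :: complex) - norm z \<le> norm (z + of_nat n)"
      by (metis add.commute norm_diff_ineq)
    then have le: "real n / 2 \<le> norm (z + of_nat n)" using elim by simp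
    have "0 \<le> norm z" by simp
    then have pos: "real n / 2 > 0" using elim by linarith
    have "(real n / 2) ^ k \<le> norm (z + of_nat n) ^ k"
      using le pos by (intro power_mono) auto
    then have "inverse (norm (z + of_nat n) ^ k) \<le> inverse ((real n / 2) ^ k)"
      using pos by (intro le_imp_inverse_le) auto
    also have "\<dots> = 2 ^ k * inverse (real n ^ k)" by (simp add: power_divide inverse_eq_divide)
    finally show ?case by (simp add: norm_inverse norm_power)
  qed
qed


lemma not_Ints_nonpos: "z \<notin> \<int> \<Longrightarrow> (z::complex) \<notin> \<int>\<^sub>\<le>\<^sub>0"
  using nonpos_Ints_subset_Ints by blast

lemma not_Ints_1_minus: "z \<notin> \<int> \<Longrightarrow> (1 - z::complex) \<notin> \<int>\<^sub>\<le>\<^sub>0"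
proof
  assume "z \<notin> \<int>" "1 - z \<in> \<int>\<^sub>\<le>\<^sub>0"
  then have "1 - z \<in> \<int>" using nonpos_Ints_subset_Ints by blast
  then have "1 - (1 - z) \<in> \<int>" by (intro Ints_diff) auto
  then show False using \<open>z \<notin> \<int>\<close> by simp
qed

lemma sin_pi_nonzero: "z \<notin> \<int> \<Longrightarrow> sin (of_real pi * z) \<noteq> (0::complex)"
proof
  assume z: "z \<notin> \<int>" and "sin (of_real pi * z) = 0"
  then obtain n :: int where "of_real pi * z = of_real (of_int n * pi)"
    using sin_eq_0 by blast
  then have "z = of_int n" by (simp add: field_simps)
  then show False using z by simp
qed

lemma open_not_Ints: "open (- (\<int> :: complex set))"
  by (simp add: open_Compl)

lemma Digamma_reflection:
  fixes z :: complex
  assumes z: "z \<notin> \<int>"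
  shows "Digamma (1 - z) - Digamma z = of_real pi * cot (of_real pi * z)"
proof -
  define S where "S = - (\<int> :: complex set)"
  have S: "open S" "z \<in> S" using z by (auto simp: S_def open_not_Ints)
  have eq: "Gamma w * Gamma (1 - w) = of_real pi / sin (of_real pi * w)" if "w \<in> S" for w
    by (rule Gamma_reflection_complex)
  have d1: "((\<lambda>w. Gamma w * Gamma (1 - w)) has_field_derivative
      Gamma z * Digamma z * Gamma (1 - z) + Gamma z * (Gamma (1 - z) * Digamma (1 - z) * (0 - 1))) (at z)"
    using not_Ints_nonpos[OF z] not_Ints_1_minus[OF z]
    by (auto intro!: derivative_eq_intros)
  have sn: "sin (of_real pi * z) \<noteq> 0" by (rule sin_pi_nonzero[OF z])
  have d2: "((\<lambda>w. of_real pi / sin (of_real pi * w)) has_field_derivative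
      - (of_real pi * (cos (of_real pi * z) * (of_real pi * 1))) / (sin (of_real pi * z) * sin (of_real pi * z))) (at z)"
    using sn by (auto intro!: derivative_eq_intros)
  have "Gamma z * Digamma z * Gamma (1 - z) + Gamma z * (Gamma (1 - z) * Digamma (1 - z) * (0 - 1))
      = - (of_real pi * (cos (of_real pi * z) * (of_real pi * 1))) / (sin (of_real pi * z) * sin (of_real pi * z))"
    by (rule DERIV_unique_open[OF S eq d1 d2])
  then have "(Gamma z * Gamma (1 - z)) * (Digamma z - Digamma (1 - z))
      = - (of_real pi * (cos (of_real pi * z) * (of_real pi * 1))) / (sin (of_real pi * z) * sin (of_real pi * z))"
    by (simp add: algebra_simps)
  then have "(of_real pi / sin (of_real pi * z)) * (Digamma z - Digamma (1 - z))
      = - (of_real pi * (cos (of_real pi * z) * (of_real pi * 1))) / (sin (of_real pi * z) * sin (of_real pi * z))"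
    by (simp add: Gamma_reflection_complex)
  then have "(sin (of_real pi * z) / of_real pi) * ((of_real pi / sin (of_real pi * z)) * (Digamma z - Digamma (1 - z)))
     = (sin (of_real pi * z) / of_real pi) * (- (of_real pi * (cos (of_real pi * z) * (of_real pi * 1))) / (sin (of_real pi * z) * sin (of_real pi * z)))"
    by simp
  moreover have "(sin (of_real pi * z) / of_real pi) * ((of_real pi / sin (of_real pi * z)) * (Digamma z - Digamma (1 - z)))
     = Digamma z - Digamma (1 - z)" using sn by (simp add: field_simps)
  moreover have "(sin (of_real pi * z) / of_real pi) * (- (of_real pi * (cos (of_real pi * z) * (of_real pi * 1))) / (sin (of_real pi * z) * sin (of_real pi * z)))
     = - of_real pi * cos (of_real pi * z) / sin (of_real pi * z)" using sn by (simp add: field_simps power2_eq_square)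
  ultimately have "Digamma z - Digamma (1 - z) = - of_real pi * cos (of_real pi * z) / sin (of_real pi * z)"
    by simp
  then show ?thesis by (simp add: cot_def algebra_simps)
qed

fun QA :: "nat \<Rightarrow> complex poly" where
  "QA 0 = [:0, 1:]"
| "QA (Suc j) = - (pderiv (QA j) * [:1, 0, 1:])"

lemma inverse_sin_sq: "sin w \<noteq> 0 \<Longrightarrow> inverse (sin w ^ 2) = 1 + cot w ^ 2" for w :: complex
proof -
  assume s: "sin w \<noteq> 0"
  have "sin w ^ 2 + cos w ^ 2 = 1" by (rule sin_cos_squared_add)
  then show ?thesis using s by (simp add: cot_def field_simps)
qed

lemma chainA:
  fixes z :: complex
  assumes "z \<notin> \<int>"
  shows "(-1) ^ j * Polygamma j (1 - z) - Polygamma j z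
           = of_real pi ^ Suc j * poly (QA j) (cot (of_real pi * z))"
  using assms
proof (induction j arbitrary: z)
  case 0
  then show ?case using Digamma_reflection[OF 0] by simp
next
  case (Suc j)
  define S where "S = - (\<int> :: complex set)"
  have S: "open S" "z \<in> S" using Suc.prems by (auto simp: S_def open_not_Ints)
  have eq: "(-1) ^ j * Polygamma j (1 - w) - Polygamma j w
           = of_real pi ^ Suc j * poly (QA j) (cot (of_real pi * w))" if "w \<in> S" for w
    using Suc.IH[of w] that by (auto simp: S_def)
  have d1: "((\<lambda>w. (-1) ^ j * Polygamma j (1 - w) - Polygamma j w) has_field_derivative
      ((-1) ^ j * (Polygamma (Suc j) (1 - z) * (0 - 1)) - Polygamma (Suc j) z)) (at z)"
    using not_Ints_nonpos[OF Suc.prems] not_Ints_1_minus[OF Suc.prems]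
    by (auto intro!: derivative_eq_intros)
  have sn: "sin (of_real pi * z) \<noteq> 0" by (rule sin_pi_nonzero[OF Suc.prems])
  have c: "(cot has_field_derivative - inverse ((sin (of_real pi * z))\<^sup>2)) (at (of_real pi * z))"
    by (rule DERIV_cot[OF sn])
  have c2: "((\<lambda>w. cot (of_real pi * w)) has_field_derivative
       - inverse ((sin (of_real pi * z))\<^sup>2) * of_real pi) (at z)"
  proof -
    have "((\<lambda>w. of_real pi * w) has_field_derivative of_real pi) (at z)"
      by (auto intro!: derivative_eq_intros)
    from DERIV_chain2[OF c this] show ?thesis .
  qed
  have c3: "((\<lambda>w. poly (QA j) (cot (of_real pi * w))) has_field_derivative
       poly (pderiv (QA j)) (cot (of_real pi * z)) * (- inverse ((sin (of_real pi * z))\<^sup>2) * of_real pi)) (at z)"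
    by (rule DERIV_chain2[OF poly_DERIV c2])
  have d2: "((\<lambda>w. of_real pi ^ Suc j * poly (QA j) (cot (of_real pi * w))) has_field_derivative
       of_real pi ^ Suc j * (poly (pderiv (QA j)) (cot (of_real pi * z)) * (- inverse ((sin (of_real pi * z))\<^sup>2) * of_real pi))) (at z)"
    by (rule DERIV_cmult[OF c3])
  have "(-1) ^ j * (Polygamma (Suc j) (1 - z) * (0 - 1)) - Polygamma (Suc j) z
      = of_real pi ^ Suc j * (poly (pderiv (QA j)) (cot (of_real pi * z)) * (- inverse ((sin (of_real pi * z))\<^sup>2) * of_real pi))"
    by (rule DERIV_unique_open[OF S eq d1 d2])
  also have "\<dots> = of_real pi ^ Suc (Suc j) * poly (QA (Suc j)) (cot (of_real pi * z))"
    by (simp only: inverse_sin_sq[OF sn]) (simp add: algebra_simps power2_eq_square)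
  finally show ?case by (simp add: algebra_simps)
qed

lemma cot_q:
  fixes z :: complex
  assumes "Im z > 0"
  shows "of_real pi * cot (of_real pi * z) = of_real pi * \<i> - 2 * of_real pi * \<i> * Phi 0 z"
proof -
  define E where "E = exp (\<i> * (of_real pi * z))"
  have E0: "E \<noteq> 0" by (simp add: E_def)
  have q: "qvar z = E ^ 2"
    by (simp add: qvar_def E_def power2_eq_square exp_add[symmetric] algebra_simps)
  have nq: "norm (qvar z) < 1" using assms by (rule norm_qvar_lt1)
  have E1: "E ^ 2 \<noteq> 1" using nq q by auto
  have Phi0: "Phi 0 z = 1 / (1 - E ^ 2)"
    unfolding Phi_def PS_def using suminf_geometric[OF nq] q by (simp add: divide_inverse)
  have ci: "cos (of_real pi * z) = (E + inverse E) / 2"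
    by (simp add: cos_exp_eq E_def exp_minus)
  have si: "sin (of_real pi * z) = (E - inverse E) / (2 * \<i>)"
    by (simp add: sin_exp_eq E_def exp_minus)
  have d: "E * E - 1 \<noteq> 0" using E1 by (simp add: power2_eq_square)
  have d': "1 - E * E \<noteq> 0" using E1 by (simp add: power2_eq_square)
  show ?thesis
    unfolding cot_def ci si Phi0 using E0 d d'
    by (simp add: field_simps power2_eq_square)
qed

lemma chainB:
  fixes z :: complex
  assumes "Im z > 0"
  shows "(-1) ^ j * Polygamma j (1 - z) - Polygamma j z
           = (if j = 0 then of_real pi * \<i> else 0) - (2 * of_real pi * \<i>) ^ Suc j * Phi j z"
  using assms
proof (induction j arbitrary: z)
  case 0
  have "z \<notin> \<int>" using 0 by (auto elim: Ints_cases)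
  then show ?case using Digamma_reflection[of z] cot_q[OF 0] by simp
next
  case (Suc j)
  define S where "S = {z::complex. Im z > 0}"
  have S: "open S" "z \<in> S" using Suc.prems by (auto simp: S_def open_halfspace_Im_gt)
  have zi: "z \<notin> \<int>" using Suc.prems by (auto elim: Ints_cases)
  have eq: "(-1) ^ j * Polygamma j (1 - w) - Polygamma j w
           = (if j = 0 then of_real pi * \<i> else 0) - (2 * of_real pi * \<i>) ^ Suc j * Phi j w" if "w \<in> S" for w
    using Suc.IH[of w] that by (auto simp: S_def)
  have d1: "((\<lambda>w. (-1) ^ j * Polygamma j (1 - w) - Polygamma j w) has_field_derivative
      ((-1) ^ j * (Polygamma (Suc j) (1 - z) * (0 - 1)) - Polygamma (Suc j) z)) (at z)"
    using not_Ints_nonpos[OF zi] not_Ints_1_minus[OF zi]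
    by (auto intro!: derivative_eq_intros)
  have d2: "((\<lambda>w. (if j = 0 then of_real pi * \<i> else 0) - (2 * of_real pi * \<i>) ^ Suc j * Phi j w) has_field_derivative
      (0 - (2 * of_real pi * \<i>) ^ Suc j * (2 * of_real pi * \<i> * Phi (Suc j) z))) (at z)"
  proof -
    have "((\<lambda>w. (2 * of_real pi * \<i>) ^ Suc j * Phi j w) has_field_derivative
        (2 * of_real pi * \<i>) ^ Suc j * (2 * of_real pi * \<i> * Phi (Suc j) z)) (at z)"
      by (rule DERIV_cmult[OF Phi_deriv[OF Suc.prems]])
    from DERIV_diff[OF DERIV_const this] show ?thesis .
  qed
  have "(-1) ^ j * (Polygamma (Suc j) (1 - z) * (0 - 1)) - Polygamma (Suc j) z
      = (0 - (2 * of_real pi * \<i>) ^ Suc j * (2 * of_real pi * \<i> * Phi (Suc j) z))"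
    by (rule DERIV_unique_open[OF S eq d1 d2])
  then show ?case by (simp add: algebra_simps)
qed


lemma QA3: "poly (QA 3) x = - 2 - 8 * x ^ 2 - 6 * x ^ 4"
  by (simp add: numeral_3_eq_3 pderiv_pCons pderiv_mult algebra_simps power2_eq_square power4_eq_xxxx)

lemma QA5: "poly (QA 5) x = - 16 - 136 * x ^ 2 - 240 * x ^ 4 - 120 * x ^ 6"
  by (simp add: eval_nat_numeral pderiv_pCons pderiv_mult algebra_simps)

lemma of_real_not_Ints:
  assumes "0 < x" "x < 1"
  shows "(of_real x :: complex) \<notin> \<int>"
proof
  assume "(of_real x :: complex) \<in> \<int>"
  then obtain n :: int where "(of_real x :: complex) = of_int n" by (auto elim: Ints_cases)
  then have xn: "x = of_int n" by (metis of_real_eq_iff of_real_of_int_eq)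
  then have "0 < n" using assms by simp
  moreover have "n < 1" using assms xn by simp
  ultimately show False by simp
qed

lemma chainA_ofreal:
  fixes x :: real
  assumes "0 < x" "x < 1"
  shows "of_real ((-1) ^ j * Polygamma j (1 - x) - Polygamma j x)
           = of_real pi ^ Suc j * poly (QA j) (of_real (cot (pi * x)))"
proof -
  have "(-1) ^ j * Polygamma j (1 - of_real x) - Polygamma j (of_real x :: complex)
           = of_real pi ^ Suc j * poly (QA j) (cot (of_real pi * of_real x))"
    by (rule chainA[OF of_real_not_Ints[OF assms]])
  moreover have "Polygamma j (1 - of_real x :: complex) = of_real (Polygamma j (1 - x))"
    using Polygamma_of_real[of "1 - x" j] assms by simp
  moreover have "Polygamma j (of_real x :: complex) = of_real (Polygamma j x)"
    using assms by (intro Polygamma_of_real) auto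
  moreover have "cot (of_real pi * of_real x :: complex) = of_real (cot (pi * x))"
    by (metis cot_of_real of_real_mult)
  ultimately have "(-1) ^ j * of_real (Polygamma j (1 - x)) - of_real (Polygamma j x)
           = (of_real pi ^ Suc j * poly (QA j) (of_real (cot (pi * x))) :: complex)"
    by metis
  then show ?thesis by simp
qed

lemma poly3_real:
  fixes x :: real
  assumes "0 < x" "x < 1"
  shows "Polygamma 3 (1 + x) + Polygamma 3 (1 - x)
           = pi ^ 4 * (2 + 8 * cot (pi * x) ^ 2 + 6 * cot (pi * x) ^ 4) - 6 / x ^ 4"
proof -
  have "of_real ((-1) ^ 3 * Polygamma 3 (1 - x) - Polygamma 3 x)
           = (of_real pi ^ 4 * (- 2 - 8 * of_real (cot (pi * x)) ^ 2 - 6 * of_real (cot (pi * x)) ^ 4) :: complex)"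
    using chainA_ofreal[OF assms, of 3] by (simp add: QA3)
  also have "\<dots> = of_real (pi ^ 4 * (- 2 - 8 * cot (pi * x) ^ 2 - 6 * cot (pi * x) ^ 4))" by simp
  finally have e: "- Polygamma 3 (1 - x) - Polygamma 3 x = pi ^ 4 * (- 2 - 8 * cot (pi * x) ^ 2 - 6 * cot (pi * x) ^ 4)"
    by (simp only: of_real_eq_iff) simp
  have p: "Polygamma 3 (x + 1) = Polygamma 3 x + (-1) ^ 3 * fact 3 / x ^ Suc 3"
    using assms by (intro Polygamma_plus1) auto
  show ?thesis using e p by (simp add: algebra_simps fact_numeral)
qed

lemma poly5_real:
  fixes x :: real
  assumes "0 < x" "x < 1"
  shows "Polygamma 5 (1 + x) + Polygamma 5 (1 - x)
           = pi ^ 6 * (16 + 136 * cot (pi * x) ^ 2 + 240 * cot (pi * x) ^ 4 + 120 * cot (pi * x) ^ 6) - 120 / x ^ 6"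
proof -
  have "of_real ((-1) ^ 5 * Polygamma 5 (1 - x) - Polygamma 5 x)
           = (of_real pi ^ 6 * (- 16 - 136 * of_real (cot (pi * x)) ^ 2 - 240 * of_real (cot (pi * x)) ^ 4 - 120 * of_real (cot (pi * x)) ^ 6) :: complex)"
    using chainA_ofreal[OF assms, of 5] by (simp add: QA5)
  also have "\<dots> = of_real (pi ^ 6 * (- 16 - 136 * cot (pi * x) ^ 2 - 240 * cot (pi * x) ^ 4 - 120 * cot (pi * x) ^ 6))" by simp
  finally have e: "- Polygamma 5 (1 - x) - Polygamma 5 x = pi ^ 6 * (- 16 - 136 * cot (pi * x) ^ 2 - 240 * cot (pi * x) ^ 4 - 120 * cot (pi * x) ^ 6)"
    by (simp only: of_real_eq_iff) simp
  have p: "Polygamma 5 (x + 1) = Polygamma 5 x + (-1) ^ 5 * fact 5 / x ^ Suc 5"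
    using assms by (intro Polygamma_plus1) auto
  show ?thesis using e p by (simp add: algebra_simps fact_numeral)
qed

lemma alg3:
  fixes x c :: real
  assumes "x \<noteq> 0"
  shows "pi ^ 4 * (2*(1+c^2)*(1+3*c^2) - 6/(pi*x)^4) = pi ^ 4 * (2 + 8 * c ^ 2 + 6 * c ^ 4) - 6 / x ^ 4"
proof -
  have "pi ^ 4 * (6/(pi*x)^4) = 6 / x ^ 4" using assms by (simp add: power_mult_distrib)
  then show ?thesis by (simp add: algebra_simps)
qed

lemma alg5:
  fixes x c :: real
  assumes "x \<noteq> 0"
  shows "pi ^ 6 * ((16 + 136*c^2 + 240*c^4 + 120*c^6) - 120/(pi*x)^6) = pi ^ 6 * (16 + 136 * c ^ 2 + 240 * c ^ 4 + 120 * c ^ 6) - 120 / x ^ 6"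
proof -
  have "pi ^ 6 * (120/(pi*x)^6) = 120 / x ^ 6" using assms by (simp add: power_mult_distrib)
  then show ?thesis by (simp add: algebra_simps)
qed

lemma lim3: "((\<lambda>y::real. 2*(1+(cos y/sin y)^2)*(1+3*(cos y/sin y)^2) - 6/y^4) \<longlongrightarrow> 2/15) (at_right 0)"
  by real_asymp

lemma lim5: "((\<lambda>y::real. (16 + 136*(cos y/sin y)^2 + 240*(cos y/sin y)^4 + 120*(cos y/sin y)^6) - 120/y^6) \<longlongrightarrow> 16/63) (at_right 0)"
  by real_asymp

lemma pi_x_lim: "filterlim (\<lambda>x::real. pi * x) (at_right 0) (at_right 0)"
  by real_asymp

lemma Polygamma3_1: "Polygamma 3 (1::real) = pi ^ 4 / 15"
proof -
  have c: "isCont (\<lambda>x::real. Polygamma 3 (1 + x) + Polygamma 3 (1 - x)) 0"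
    by (intro continuous_intros) auto
  have l1: "((\<lambda>x::real. Polygamma 3 (1 + x) + Polygamma 3 (1 - x)) \<longlongrightarrow> 2 * Polygamma 3 1) (at_right 0)"
    using c unfolding isCont_def by (auto intro: tendsto_mono[OF at_le])
  have "((\<lambda>x. pi ^ 4 * ((\<lambda>y::real. 2*(1+(cos y/sin y)^2)*(1+3*(cos y/sin y)^2) - 6/y^4) (pi * x)))
          \<longlongrightarrow> pi ^ 4 * (2/15)) (at_right 0)"
    by (intro tendsto_mult_left filterlim_compose[OF lim3 pi_x_lim])
  moreover have "eventually (\<lambda>x. pi ^ 4 * ((\<lambda>y::real. 2*(1+(cos y/sin y)^2)*(1+3*(cos y/sin y)^2) - 6/y^4) (pi * x))
       = Polygamma 3 (1 + x) + Polygamma 3 (1 - x)) (at_right 0)"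
  proof -
    have "eventually (\<lambda>x::real. x < 1) (at_right 0)" by real_asymp
    moreover have "eventually (\<lambda>x::real. x > 0) (at_right 0)" by real_asymp
    ultimately show ?thesis
    proof eventually_elim
      case (elim x)
      show ?case using poly3_real[OF elim(2,1)] alg3[of x "cot (pi * x)"] elim
        by (simp add: cot_def)
    qed
  qed
  ultimately have l2: "((\<lambda>x::real. Polygamma 3 (1 + x) + Polygamma 3 (1 - x)) \<longlongrightarrow> pi ^ 4 * (2/15)) (at_right 0)"
    by (rule Lim_transform_eventually)
  have "2 * Polygamma 3 (1::real) = pi ^ 4 * (2/15)"
    using tendsto_unique[OF _ l1 l2] by simp
  then show ?thesis by simp
qed

lemma Polygamma5_1: "Polygamma 5 (1::real) = 8 * pi ^ 6 / 63"
proof -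
  have c: "isCont (\<lambda>x::real. Polygamma 5 (1 + x) + Polygamma 5 (1 - x)) 0"
    by (intro continuous_intros) auto
  have l1: "((\<lambda>x::real. Polygamma 5 (1 + x) + Polygamma 5 (1 - x)) \<longlongrightarrow> 2 * Polygamma 5 1) (at_right 0)"
    using c unfolding isCont_def by (auto intro: tendsto_mono[OF at_le])
  have "((\<lambda>x. pi ^ 6 * ((\<lambda>y::real. (16 + 136*(cos y/sin y)^2 + 240*(cos y/sin y)^4 + 120*(cos y/sin y)^6) - 120/y^6) (pi * x)))
          \<longlongrightarrow> pi ^ 6 * (16/63)) (at_right 0)"
    by (intro tendsto_mult_left filterlim_compose[OF lim5 pi_x_lim])
  moreover have "eventually (\<lambda>x. pi ^ 6 * ((\<lambda>y::real. (16 + 136*(cos y/sin y)^2 + 240*(cos y/sin y)^4 + 120*(cos y/sin y)^6) - 120/y^6) (pi * x))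
       = Polygamma 5 (1 + x) + Polygamma 5 (1 - x)) (at_right 0)"
  proof -
    have "eventually (\<lambda>x::real. x < 1) (at_right 0)" by real_asymp
    moreover have "eventually (\<lambda>x::real. x > 0) (at_right 0)" by real_asymp
    ultimately show ?thesis
    proof eventually_elim
      case (elim x)
      show ?case using poly5_real[OF elim(2,1)] alg5[of x "cot (pi * x)"] elim
        by (simp add: cot_def)
    qed
  qed
  ultimately have l2: "((\<lambda>x::real. Polygamma 5 (1 + x) + Polygamma 5 (1 - x)) \<longlongrightarrow> pi ^ 6 * (16/63)) (at_right 0)"
    by (rule Lim_transform_eventually)
  have "2 * Polygamma 5 (1::real) = pi ^ 6 * (16/63)"
    using tendsto_unique[OF _ l1 l2] by simp
  then show ?thesis by simp
qed


lemma Polygamma_1_sum: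
  assumes "odd j"
  shows "Polygamma j (1::complex) = fact j * (\<Sum>n. inverse ((1 + of_nat n) ^ Suc j))"
proof -
  have "j \<noteq> 0" using assms by (cases j) auto
  moreover have "(-1::complex) ^ Suc j = 1" using assms by (simp add: minus_one_power_iff)
  ultimately show ?thesis using assms by (simp add: Polygamma_def)
qed

lemma zeta4: "(\<Sum>n. inverse ((1 + of_nat n) ^ 4) :: complex) = of_real (pi ^ 4 / 90)"
proof -
  define S where "S = (\<Sum>n. inverse ((1 + of_nat n) ^ 4) :: complex)"
  have e: "Suc 3 = (4::nat)" by simp
  have P: "Polygamma 3 (1::complex) = fact 3 * S"
    using Polygamma_1_sum[of 3, unfolded e] unfolding S_def by simp
  have f: "(fact 3 :: complex) = 6" by (simp add: fact_numeral)
  have "Polygamma 3 (1::complex) = of_real (Polygamma 3 1)"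
    using Polygamma_of_real[of 1 3] by simp
  also have "\<dots> = of_real (pi ^ 4 / 15)" by (simp add: Polygamma3_1)
  finally have "6 * S = of_real (pi ^ 4 / 15)" using P f by simp
  then have "S = of_real (pi ^ 4 / 15) / 6" by (simp add: field_simps)
  also have "\<dots> = of_real (pi ^ 4 / 90)" by simp
  finally show ?thesis unfolding S_def .
qed

lemma zeta6: "(\<Sum>n. inverse ((1 + of_nat n) ^ 6) :: complex) = of_real (pi ^ 6 / 945)"
proof -
  define S where "S = (\<Sum>n. inverse ((1 + of_nat n) ^ 6) :: complex)"
  have e: "Suc 5 = (6::nat)" by simp
  have P: "Polygamma 5 (1::complex) = fact 5 * S"
    using Polygamma_1_sum[of 5, unfolded e] unfolding S_def by simp
  have f: "(fact 5 :: complex) = 120" by (simp add: fact_numeral)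
  have "Polygamma 5 (1::complex) = of_real (Polygamma 5 1)"
    using Polygamma_of_real[of 1 5] by simp
  also have "\<dots> = of_real (8 * pi ^ 6 / 63)" by (simp add: Polygamma5_1)
  finally have "120 * S = of_real (8 * pi ^ 6 / 63)" using P f by simp
  then have "S = of_real (8 * pi ^ 6 / 63) / 120" by (simp add: field_simps)
  also have "\<dots> = of_real (pi ^ 6 / 945)" by simp
  finally show ?thesis unfolding S_def .
qed

lemma int_zeta_has_sum:
  assumes "odd j"
  shows "((\<lambda>d::int. inverse ((of_int d :: complex) ^ Suc j)) has_sum
           (2 * (\<Sum>n. inverse ((1 + of_nat n) ^ Suc j)))) UNIV"
proof -
  have k2: "Suc j \<ge> 2" using assms by (cases j) auto
  have ev: "even (Suc j)" using assms by simp
  have s1: "summable (\<lambda>n. norm (inverse ((of_int (int n) :: complex) ^ Suc j)))"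
    using summable_norm_inv_pow[OF k2, of 0] by simp
  have eq2: "inverse ((of_int (- int n - 1) :: complex) ^ Suc j) = inverse ((1 + of_nat n) ^ Suc j)" for n
  proof -
    have "(of_int (- int n - 1) :: complex) = - (1 + of_nat n)" by simp
    then show ?thesis using ev by (simp only: power_minus_even)
  qed
  have s2: "summable (\<lambda>n. norm (inverse ((of_int (- int n - 1) :: complex) ^ Suc j)))"
    using summable_norm_inv_pow[OF k2, of 1] by (simp only: eq2)
  have sm: "summable (\<lambda>n. inverse ((of_nat n :: complex) ^ Suc j))"
    using summable_norm_cancel[OF s1] by simp
  have "(\<Sum>n. inverse ((of_int (int n) :: complex) ^ Suc j)) = (\<Sum>n. inverse ((1 + of_nat n) ^ Suc j))"
    using suminf_split_head[OF sm] by simp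
  moreover have "(\<Sum>n. inverse ((of_int (- int n - 1) :: complex) ^ Suc j)) = (\<Sum>n. inverse ((1 + of_nat n) ^ Suc j))"
    by (simp only: eq2)
  ultimately show ?thesis using int_has_sum_split[OF s1 s2] by simp
qed

lemma lipschitz:
  fixes z :: complex
  assumes z: "Im z > 0" and j: "odd j"
  shows "((\<lambda>d::int. inverse ((z + of_int d) ^ Suc j)) has_sum
           ((2 * of_real pi * \<i>) ^ Suc j / fact j * Phi j z)) UNIV"
proof -
  have k2: "Suc j \<ge> 2" using j by (cases j) auto
  have ev: "even (Suc j)" using j by simp
  have j0: "j > 0" using j by (cases j) auto
  have z0: "z \<noteq> 0" using z by auto
  have z1: "1 - z \<noteq> 0" using z by auto
  have s1: "summable (\<lambda>n. norm (inverse ((z + of_int (int n)) ^ Suc j)))"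
    using summable_norm_inv_pow[OF k2, of z] by simp
  have eq2: "inverse ((z + of_int (- int n - 1)) ^ Suc j) = inverse ((1 - z + of_nat n) ^ Suc j)" for n
  proof -
    have "(z + of_int (- int n - 1)) = - (1 - z + of_nat n)" by simp
    then show ?thesis using ev by (simp only: power_minus_even)
  qed
  have s2: "summable (\<lambda>n. norm (inverse ((z + of_int (- int n - 1)) ^ Suc j)))"
    using summable_norm_inv_pow[OF k2, of "1 - z"] by (simp only: eq2)
  have A: "(\<Sum>n. inverse ((z + of_int (int n)) ^ Suc j)) = Polygamma j z / fact j"
    using sums_unique[OF Polygamma_LIMSEQ[OF z0 j0]] j by simp
  have B: "(\<Sum>n. inverse ((z + of_int (- int n - 1)) ^ Suc j)) = Polygamma j (1 - z) / fact j"
    using sums_unique[OF Polygamma_LIMSEQ[OF z1 j0]] j by (simp only: eq2) simp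
  have C: "(-1) ^ j * Polygamma j (1 - z) - Polygamma j z = 0 - (2 * of_real pi * \<i>) ^ Suc j * Phi j z"
    using chainB[OF z, of j] j0 by simp
  have C': "Polygamma j (1 - z) + Polygamma j z = (2 * of_real pi * \<i>) ^ Suc j * Phi j z"
    using C j by (simp add: algebra_simps)
  have "Polygamma j z / fact j + Polygamma j (1 - z) / fact j = (2 * of_real pi * \<i>) ^ Suc j / fact j * Phi j z"
    using C' by (simp add: field_simps)
  then show ?thesis using int_has_sum_split[OF s1 s2] A B by simp
qed


lemma Suc_mult_ge: "Suc b + a \<le> Suc a * Suc b"
  by (simp add: algebra_simps)

lemma divisor_regroup:
  fixes Q :: complex
  assumes Q: "norm Q < 1" and j: "j > 0"
  shows "((\<lambda>a. PS j (Q ^ Suc a)) has_sum (\<Sum>n. of_nat (divsum j (Suc n)) * Q ^ Suc n)) UNIV"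
proof -
  define q0 where "q0 = norm Q"
  have q0: "0 \<le> q0" "q0 < 1" using Q by (auto simp: q0_def)
  define W where "W = (\<lambda>(a::nat, b::nat). (of_nat (Suc b) ^ j * Q ^ (Suc a * Suc b) :: complex))"
  define B where "B = (\<lambda>(a::nat, b::nat). real (Suc b) ^ j * q0 ^ Suc b * q0 ^ a)"
  have WB: "norm (W x) \<le> B x" for x
  proof (cases x)
    case (Pair a b)
    have "q0 ^ (Suc a * Suc b) \<le> q0 ^ (Suc b + a)"
      using q0 by (intro power_decreasing Suc_mult_ge) auto
    then have "real (Suc b) ^ j * q0 ^ (Suc a * Suc b) \<le> real (Suc b) ^ j * q0 ^ (Suc b + a)"
      by (intro mult_left_mono) auto
    moreover have "norm (W x) = real (Suc b) ^ j * q0 ^ (Suc a * Suc b)"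
      unfolding Pair W_def q0_def by (simp add: norm_mult norm_power del: of_nat_Suc)
    moreover have "B x = real (Suc b) ^ j * q0 ^ (Suc b + a)"
      unfolding Pair B_def by (simp add: power_add del: of_nat_Suc)
    ultimately show ?thesis by simp
  qed
  have sb: "summable (\<lambda>b. real (Suc b) ^ j * q0 ^ Suc b)"
  proof -
    have "summable (\<lambda>b. q0 * (real (Suc b) ^ j * q0 ^ b))"
      using summable_Suc_pow_geom[of q0 j] q0 by (intro summable_mult) auto
    then show ?thesis by (simp add: algebra_simps)
  qed
  define Sb where "Sb = (\<Sum>b. real (Suc b) ^ j * q0 ^ Suc b)"
  have hb: "((\<lambda>b. real (Suc b) ^ j * q0 ^ Suc b) has_sum Sb) UNIV"
    unfolding Sb_def using sb q0
    by (intro norm_summable_imp_has_sum summable_sums) (auto simp: abs_mult)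
  have Bsum: "B summable_on (Sigma UNIV (\<lambda>_. UNIV))"
  proof (rule summable_on_SigmaI)
    show "((\<lambda>b. B (a, b)) has_sum (Sb * q0 ^ a)) UNIV" for a
      unfolding B_def using has_sum_cmult_left[OF hb, of "q0 ^ a"] by simp
    have "summable (\<lambda>a. Sb * q0 ^ a)" using q0 by (intro summable_mult summable_geometric) auto
    then show "(\<lambda>a. Sb * q0 ^ a) summable_on UNIV"
    proof (subst summable_on_UNIV_nonneg_real_iff)
      have "0 \<le> Sb" unfolding Sb_def using sb q0 by (intro suminf_nonneg) auto
      then show "0 \<le> Sb * q0 ^ n" for n using q0 by simp
    qed simp
    show "0 \<le> B (a, b)" for a b using q0 by (simp add: B_def)
  qed
  then have Bsum': "B summable_on UNIV" by simp
  have Wabs: "(\<lambda>x. norm (W x)) summable_on UNIV"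
    by (rule Infinite_Sum.abs_summable_on_comparison_test'[OF Bsum' WB])
  have Wsum: "W summable_on UNIV" by (rule abs_summable_summable[OF Wabs])
  define Tot where "Tot = infsum W UNIV"
  have WT: "(W has_sum Tot) UNIV" using Wsum by (simp add: Tot_def has_sum_infsum)
  have row: "((\<lambda>b. W (a, b)) has_sum PS j (Q ^ Suc a)) UNIV" for a
  proof -
    define w where "w = Q ^ Suc a"
    have "norm w = q0 ^ Suc a" unfolding w_def q0_def by (rule norm_power)
    also have "\<dots> \<le> q0 ^ 1" by (rule power_decreasing) (use q0 in auto)
    finally have w: "norm w < 1" using q0 by simp
    have eqW: "W (a, b) = of_nat (Suc b) ^ j * w ^ Suc b" for b
      unfolding W_def w_def by (simp only: prod.case power_mult)
    have sm: "summable (\<lambda>r. of_nat r ^ j * w ^ r)" by (rule summable_pow_geom[OF w])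
    have "(\<lambda>b. of_nat (Suc b) ^ j * w ^ Suc b) sums PS j w"
      using sums_Suc_iff[of "\<lambda>r. of_nat r ^ j * w ^ r"] summable_sums[OF sm] j
      by (simp add: PS_def power_0_left)
    moreover have "summable (\<lambda>b. norm (of_nat (Suc b) ^ j * w ^ Suc b))"
    proof -
      have "summable (\<lambda>r. of_nat r ^ j * norm w ^ r)" by (rule summable_pow_geom) (use w in simp)
      then have "summable (\<lambda>r. of_nat (Suc r) ^ j * norm w ^ Suc r)"
        by (subst summable_Suc_iff)
      then show ?thesis by (simp add: norm_mult norm_power del: of_nat_Suc)
    qed
    ultimately show ?thesis unfolding eqW w_def[symmetric]
      by (intro norm_summable_imp_has_sum)
  qed
  have colsum: "((\<lambda>a. PS j (Q ^ Suc a)) has_sum Tot) UNIV"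
  proof -
    have WT': "(W has_sum Tot) (Sigma (UNIV::nat set) (\<lambda>_. UNIV :: nat set))" using WT by simp
    show ?thesis by (rule has_sum_SigmaD[OF WT']) (use row in auto)
  qed
  define D where "D = Sigma (UNIV :: nat set) (\<lambda>n. {d. d dvd Suc n})"
  define F where "F = (\<lambda>(n::nat, d::nat). (of_nat d ^ j * Q ^ Suc n :: complex))"
  define h where "h = (\<lambda>(a::nat, b::nat). (Suc a * Suc b - 1, Suc b))"
  have FW: "F (h x) = W x" for x
    by (cases x) (simp add: F_def h_def W_def)
  have bij: "bij_betw h UNIV D"
  proof (rule bij_betw_byWitness[where f' = "\<lambda>(n, d). (Suc n div d - 1, d - 1)"])
    show "\<forall>x\<in>UNIV. (\<lambda>(n, d). (Suc n div d - 1, d - 1)) (h x) = x"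
    proof
      fix x :: "nat \<times> nat"
      obtain a b where x: "x = (a, b)" by (cases x)
      have e: "Suc (a + (b + a * b)) = Suc a * Suc b" by simp
      have "Suc (a + (b + a * b)) div Suc b = Suc a"
        unfolding e by (metis nonzero_mult_div_cancel_right Suc_neq_Zero)
      then show "(\<lambda>(n, d). (Suc n div d - 1, d - 1)) (h x) = x" by (simp add: x h_def)
    qed
    show "\<forall>y\<in>D. h ((\<lambda>(n, d). (Suc n div d - 1, d - 1)) y) = y"
    proof
      fix y assume "y \<in> D"
      then obtain n d where y: "y = (n, d)" and dv: "d dvd Suc n" by (auto simp: D_def)
      have d0: "d > 0" using dv by (auto intro: Nat.gr0I)
      obtain e where e: "Suc n = d * e" using dv by (auto elim: dvdE)
      have e0: "e > 0" using e by (auto intro: Nat.gr0I)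
      have "Suc n div d = e" using e d0 by simp
      then show "h ((\<lambda>(n, d). (Suc n div d - 1, d - 1)) y) = y"
        using d0 e0 e by (simp add: y h_def algebra_simps)
    qed
    show "h ` UNIV \<subseteq> D"
    proof
      fix y assume "y \<in> h ` UNIV"
      then obtain a b where y: "y = h (a, b)" by auto
      have e: "Suc (a + (b + a * b)) = Suc a * Suc b" by simp
      have "Suc b dvd Suc (a + (b + a * b))" unfolding e by (rule dvd_triv_right)
      then show "y \<in> D" by (simp add: y h_def D_def)
    qed
    show "(\<lambda>(n, d). (Suc n div d - 1, d - 1)) ` D \<subseteq> UNIV" by auto
  qed
  have FD: "(F has_sum Tot) D"
    using WT has_sum_reindex_bij_betw[OF bij, of F Tot] by (simp add: FW)
  have inner: "((\<lambda>d. F (n, d)) has_sum (of_nat (divsum j (Suc n)) * Q ^ Suc n)) {d. d dvd Suc n}" for n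
  proof (rule has_sum_finiteI)
    show "finite {d. d dvd Suc n}" by (rule finite_divisors_nat) simp
    show "of_nat (divsum j (Suc n)) * Q ^ Suc n = (\<Sum>d\<in>{d. d dvd Suc n}. F (n, d))"
      by (simp add: divsum_def F_def of_nat_sum sum_distrib_right)
  qed
  have "((\<lambda>n. of_nat (divsum j (Suc n)) * Q ^ Suc n) has_sum Tot) UNIV"
    by (rule has_sum_SigmaD[OF FD[unfolded D_def]]) (use inner in auto)
  then have "(\<lambda>n. of_nat (divsum j (Suc n)) * Q ^ Suc n) sums Tot" by (rule has_sum_imp_sums)
  then have "(\<Sum>n. of_nat (divsum j (Suc n)) * Q ^ Suc n) = Tot" by (rule sums_unique[symmetric])
  then show ?thesis using colsum by simp
qed


lemma recip_sq_summable: "summable (\<lambda>n. inverse (real (Suc n)) ^ 2)"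
proof -
  have "summable (\<lambda>n. inverse (real n ^ 2))" by (rule inverse_power_summable) auto
  then have "summable (\<lambda>n. inverse (real (Suc n) ^ 2))" by (subst summable_Suc_iff)
  then show ?thesis by (simp add: power_inverse)
qed

lemma recip_bound_aux:
  fixes t :: real
  assumes "0 \<le> t" "(t + 1)^2 \<le> 2 * (1 + u)" "0 \<le> u"
  shows "norm (1 / (1 + u)) \<le> 2 * inverse (t + 1) ^ 2"
proof -
  have "1 / (1 + u) = 2 / (2 * (1 + u))" using assms by (simp add: field_simps)
  also have "\<dots> \<le> 2 / (t + 1)^2"
    by (rule divide_left_mono[OF assms(2)]) (use assms in auto)
  also have "\<dots> = 2 * inverse (t + 1) ^ 2" by (simp add: divide_inverse power_inverse)
  finally show ?thesis using assms by simp
qed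

lemma int_recip_summable: "(\<lambda>d::int. 1 / (1 + (real_of_int d)^2)) summable_on UNIV"
proof -
  have b1: "norm (1 / (1 + (real_of_int (int n))^2)) \<le> 2 * inverse (real (Suc n)) ^ 2" for n
  proof -
    have e1: "(real n - 1)^2 = real n^2 - 2*real n + 1" "(real n + 1)^2 = real n^2 + 2*real n + 1"
      by (simp_all add: power2_eq_square algebra_simps)
    have "0 \<le> (real n - 1)^2" by simp
    then have "(real n + 1)^2 \<le> 2 * (1 + real n ^ 2)" using e1 by (smt (verit))
    from recip_bound_aux[OF _ this] show ?thesis by (simp add: add.commute)
  qed
  have b2: "norm (1 / (1 + (real_of_int (- int n - 1))^2)) \<le> 2 * inverse (real (Suc n)) ^ 2" for n
  proof -
    have e: "(real_of_int (- int n - 1))^2 = (real n + 1)^2" by (simp add: power2_eq_square algebra_simps)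
    have "(real n + 1)^2 \<le> 2 * (1 + (real n + 1) ^ 2)" by simp
    from recip_bound_aux[OF _ this] show ?thesis by (simp only: e) (simp add: add.commute)
  qed
  have s1: "summable (\<lambda>n. norm (1 / (1 + (real_of_int (int n))^2)))"
    by (rule summable_comparison_test[OF _ summable_mult[OF recip_sq_summable, of 2]]) (use b1 in auto)
  have s2: "summable (\<lambda>n. norm (1 / (1 + (real_of_int (- int n - 1))^2)))"
    by (rule summable_comparison_test[OF _ summable_mult[OF recip_sq_summable, of 2]]) (use b2 in auto)
  show ?thesis using int_has_sum_split[OF s1 s2] by (auto simp: summable_on_def)
qed

definition good_pt :: "complex \<Rightarrow> bool" where
  "good_pt p \<longleftrightarrow> (\<forall>c d :: int. (c, d) \<noteq> (0, 0) \<longrightarrow>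
     1 \<le> norm (of_int c * p + of_int d) \<and> real_of_int (c^2 + d^2) \<le> 2 * norm (of_int c * p + of_int d) ^ 2)"

lemma poly_ineq_aux:
  fixes x y :: real
  assumes "0 \<le> x" "0 \<le> y" "1 \<le> x + y"
  shows "(1 + x) * (1 + y) \<le> 4 * (x + y)^2"
proof -
  have a: "0 \<le> x * x" "0 \<le> x * y" "0 \<le> y * y" using assms by auto
  have b0: "1 * 1 \<le> (x + y) * (x + y)" by (rule mult_mono) (use assms in auto)
  then have b: "1 \<le> (x + y) * (x + y)" by simp
  have c0: "(x + y) * 1 \<le> (x + y) * (x + y)" by (rule mult_left_mono) (use assms in auto)
  then have c: "x + y \<le> (x + y) * (x + y)" by simp
  have e1: "(1 + x) * (1 + y) = 1 + (x + y) + x * y" by (simp add: algebra_simps)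
  have e2: "4 * (x + y)^2 = 4 * (x * x) + 8 * (x * y) + 4 * (y * y)" by (simp add: power2_eq_square algebra_simps)
  have e3: "(x + y) * (x + y) = x * x + 2 * (x * y) + y * y" by (simp add: algebra_simps)
  have "1 + (x + y) + x * y \<le> 4 * (x * x) + 8 * (x * y) + 4 * (y * y)"
    using a b c e3 by linarith
  then show ?thesis by (simp only: e1 e2)
qed

lemma lattice_bound:
  assumes "good_pt p" "k \<ge> 4"
  shows "norm (inverse ((of_int c * p + of_int d) ^ k)) \<le> 16 * (1 / (1 + (real_of_int c)^2) * (1 / (1 + (real_of_int d)^2)))"
proof (cases "(c, d) = (0, 0)")
  case True then show ?thesis using assms by (simp add: power_0_left)
next
  case False
  define N where "N = norm (of_int c * p + of_int d)"
  define x where "x = (real_of_int c)^2"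
  define y where "y = (real_of_int d)^2"
  have g: "1 \<le> N \<and> real_of_int (c^2 + d^2) \<le> 2 * N ^ 2"
    using assms(1) False unfolding good_pt_def N_def by blast
  have xy: "real_of_int (c^2 + d^2) = x + y" by (simp add: x_def y_def)
  have N1: "1 \<le> N" and Ns: "x + y \<le> 2 * N ^ 2" using g xy by auto
  have x0: "0 \<le> x" and y0: "0 \<le> y" by (simp_all add: x_def y_def)
  have s1: "1 \<le> x + y"
  proof -
    have "c \<noteq> 0 \<or> d \<noteq> 0" using False by auto
    moreover have "0 \<le> c^2" "0 \<le> d^2" by simp_all
    moreover have "c \<noteq> 0 \<Longrightarrow> 0 < c^2" "d \<noteq> 0 \<Longrightarrow> 0 < d^2" by simp_all
    ultimately have "1 \<le> c^2 + d^2" by linarith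
    then have "(1::real) \<le> real_of_int (c^2 + d^2)" by linarith
    then show ?thesis using xy by simp
  qed
  have "N ^ 4 \<le> N ^ k" using N1 assms(2) by (intro power_increasing) auto
  then have "inverse (N ^ k) \<le> inverse (N ^ 4)" using N1 by (intro le_imp_inverse_le) auto
  also have "N ^ 4 = (N^2)^2" by simp
  also have "inverse ((N^2)^2) \<le> inverse (((x + y)/2)^2)"
  proof (rule le_imp_inverse_le)
    show "((x + y) / 2)\<^sup>2 \<le> (N\<^sup>2)\<^sup>2" using Ns s1 by (intro power_mono) auto
    show "0 < ((x + y) / 2)\<^sup>2" using s1 by simp
  qed
  also have "inverse (((x + y)/2)^2) = 16 / (4 * (x + y)^2)" by (simp add: power_divide)
  also have "16 / (4 * (x + y)^2) \<le> 16 / ((1 + x) * (1 + y))"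
    by (rule divide_left_mono[OF poly_ineq_aux[OF x0 y0 s1]]) (use x0 y0 s1 in auto)
  also have "16 / ((1 + x) * (1 + y)) = 16 * (1 / (1 + (real_of_int c)^2) * (1 / (1 + (real_of_int d)^2)))"
    by (simp add: x_def y_def)
  finally show ?thesis by (simp add: N_def norm_inverse norm_power)
qed

lemma lattice_summable:
  assumes "good_pt p" "k \<ge> 4"
  shows "(\<lambda>(c::int, d::int). inverse ((of_int c * p + of_int d) ^ k)) summable_on UNIV"
proof -
  define R where "R = (\<lambda>d::int. 1 / (1 + (real_of_int d)^2))"
  define S0 where "S0 = infsum R UNIV"
  have R: "(R has_sum S0) UNIV" using int_recip_summable by (simp add: R_def S0_def has_sum_infsum)
  define B where "B = (\<lambda>(c::int, d::int). 16 * (R c * R d))"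
  have "B summable_on Sigma UNIV (\<lambda>_. UNIV)"
  proof (rule summable_on_SigmaI)
    show "((\<lambda>d. B (c, d)) has_sum (16 * R c * S0)) UNIV" for c
      unfolding B_def using has_sum_cmult_right[OF R, of "16 * R c"] by (simp add: mult.assoc)
    show "(\<lambda>c. 16 * R c * S0) summable_on UNIV"
      using has_sum_cmult_left[OF has_sum_cmult_right[OF R, of 16], of S0] by (auto simp: summable_on_def)
    show "0 \<le> B (c, d)" for c d by (simp add: B_def R_def)
  qed
  then have Bs: "B summable_on UNIV" by simp
  have "(\<lambda>x. norm ((\<lambda>(c::int, d::int). inverse ((of_int c * p + of_int d) ^ k)) x)) summable_on UNIV"
    by (rule Infinite_Sum.abs_summable_on_comparison_test'[OF Bs])
       (use lattice_bound[OF assms] in \<open>auto simp: B_def R_def\<close>)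
  then show ?thesis by (rule abs_summable_summable)
qed

lemma lattice_zero:
  fixes p :: complex and k :: nat and \<sigma> :: "int \<times> int \<Rightarrow> int \<times> int" and lam :: complex
  defines "T \<equiv> (\<lambda>(c::int, d::int). inverse ((of_int c * p + of_int d) ^ k))"
  assumes "good_pt p" "k \<ge> 4" "bij \<sigma>" "\<And>x. T (\<sigma> x) = lam * T x" "lam \<noteq> 1"
  shows "(T has_sum 0) UNIV"
proof -
  have sm: "T summable_on UNIV" unfolding T_def by (rule lattice_summable[OF assms(2,3)])
  have "infsum (\<lambda>x. T (\<sigma> x)) UNIV = infsum T UNIV"
    by (rule infsum_reindex_bij_betw) (use assms(4) in simp)
  then have "lam * infsum T UNIV = infsum T UNIV"
    by (simp add: assms(5) infsum_cmult_right')
  then have "(lam - 1) * infsum T UNIV = 0" by (simp add: algebra_simps)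
  then have "infsum T UNIV = 0" using assms(6) by simp
  then show ?thesis using sm by (metis has_sum_infsum)
qed


lemma lattice_eval:
  fixes p :: complex and j :: nat
  defines "T \<equiv> (\<lambda>(c::int, d::int). inverse ((of_int c * p + of_int d) ^ Suc j))"
  assumes p: "Im p > 0" and j: "odd j" and T0: "(T has_sum 0) UNIV"
  shows "2 * (\<Sum>n. inverse ((1 + of_nat n) ^ Suc j)) +
           2 * ((2 * of_real pi * \<i>) ^ Suc j / fact j) * (\<Sum>n. of_nat (divsum j (Suc n)) * qvar p ^ Suc n) = 0"
proof -
  define Z where "Z = (\<Sum>n. inverse ((1 + of_nat n) ^ Suc j) :: complex)"
  define C :: complex where "C = (2 * of_real pi * \<i>) ^ Suc j / fact j"
  define Q where "Q = qvar p"
  define S where "S = (\<Sum>n. of_nat (divsum j (Suc n)) * Q ^ Suc n)"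
  define W where "W = (\<lambda>c::int. if c = 0 then 2 * Z else C * PS j (Q ^ nat \<bar>c\<bar>))"
  have j0: "j > 0" using j by (cases j) auto
  have ev: "even (Suc j)" using j by simp
  have Q1: "norm Q < 1" unfolding Q_def using p by (rule norm_qvar_lt1)
  have bijm: "bij_betw (uminus :: int \<Rightarrow> int) UNIV UNIV"
    by (rule bij_betwI[of _ _ _ uminus]) auto
  have inner: "((\<lambda>d. T (c, d)) has_sum W c) UNIV" for c
  proof (cases "c = 0")
    case True
    then show ?thesis using int_zeta_has_sum[OF j] by (simp add: T_def W_def Z_def)
  next
    case False
    define n where "n = nat \<bar>c\<bar>"
    define z where "z = of_nat n * p"
    have n0: "n > 0" using False by (simp add: n_def)
    have z: "Im z > 0" using p n0 by (simp add: z_def)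
    have qz: "qvar z = Q ^ n" unfolding z_def Q_def by (rule qvar_mult_nat)
    have Wc: "W c = C * Phi j z"
      using False unfolding W_def Phi_def qz by (simp add: n_def)
    have L: "((\<lambda>d::int. inverse ((z + of_int d) ^ Suc j)) has_sum (C * Phi j z)) UNIV"
      using lipschitz[OF z j] by (simp add: C_def)
    show ?thesis
    proof (cases "c > 0")
      case True
      then have "of_int c = (of_nat n :: complex)" by (simp add: n_def)
      then have "T (c, d) = inverse ((z + of_int d) ^ Suc j)" for d
        by (simp add: T_def z_def)
      then show ?thesis using L Wc by simp
    next
      case False
      then have "of_int c = - (of_nat n :: complex)" using \<open>c \<noteq> 0\<close> by (simp add: n_def)
      then have e: "of_int c * p + of_int d = - (z + of_int (- d))" for d
        by (simp add: z_def algebra_simps)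
      have "T (c, d) = inverse ((z + of_int (- d)) ^ Suc j)" for d
      proof -
        have "(of_int c * p + of_int d) ^ Suc j = (z + of_int (- d)) ^ Suc j"
          using ev by (simp only: e power_minus_even)
        then show ?thesis unfolding T_def prod.case by (rule arg_cong[where f=inverse])
      qed
      moreover have "((\<lambda>d. inverse ((z + of_int (- d)) ^ Suc j)) has_sum (C * Phi j z)) UNIV"
        using has_sum_reindex_bij_betw[OF bijm, of "\<lambda>d. inverse ((z + of_int d) ^ Suc j)"] L by simp
      ultimately show ?thesis using Wc by simp
    qed
  qed
  have T0': "(T has_sum 0) (Sigma (UNIV::int set) (\<lambda>_. UNIV :: int set))" using T0 by simp
  have WS: "(W has_sum 0) UNIV"
    by (rule has_sum_SigmaD[OF T0']) (use inner in auto)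
  have DR: "((\<lambda>a. PS j (Q ^ Suc a)) has_sum S) UNIV"
    unfolding S_def by (rule divisor_regroup[OF Q1 j0])
  have ns: "summable (\<lambda>a. norm (PS j (Q ^ Suc a)))"
  proof -
    have "(\<lambda>a. PS j (Q ^ Suc a)) summable_on UNIV" using DR by (auto simp: summable_on_def)
    then have "(\<lambda>a. norm (PS j (Q ^ Suc a))) summable_on UNIV"
      by (simp add: summable_on_iff_abs_summable_on_complex)
    then show ?thesis by (subst (asm) summable_on_UNIV_nonneg_real_iff) auto
  qed
  have WP: "W (int (Suc n)) = C * PS j (Q ^ Suc n)" for n by (simp add: W_def del: of_nat_Suc)
  have WN: "W (- int n - 1) = C * PS j (Q ^ Suc n)" for n
  proof -
    have "nat \<bar>- int n - 1\<bar> = Suc n" by simp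
    then show ?thesis by (simp add: W_def)
  qed
  have nsC: "summable (\<lambda>n. norm (C * PS j (Q ^ Suc n)))"
    using summable_mult[OF ns, of "norm C"] by (simp add: norm_mult)
  have s1: "summable (\<lambda>n. norm (W (int n)))"
    using nsC by (subst summable_Suc_iff[symmetric]) (simp only: WP)
  have s2: "summable (\<lambda>n. norm (W (- int n - 1)))"
    using nsC by (simp only: WN)
  have sumS: "(\<Sum>n. C * PS j (Q ^ Suc n)) = C * S"
  proof -
    have "(\<lambda>a. PS j (Q ^ Suc a)) sums S" by (rule has_sum_imp_sums[OF DR])
    then have "(\<lambda>a. C * PS j (Q ^ Suc a)) sums (C * S)" by (rule sums_mult)
    then show ?thesis by (rule sums_unique[symmetric])
  qed
  have A: "(\<Sum>n. W (int n)) = 2 * Z + C * S"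
  proof -
    have sm: "summable (\<lambda>n. W (int n))" using summable_norm_cancel[OF s1] .
    have "(\<Sum>n. W (int (Suc n))) = (\<Sum>n. W (int n)) - W (int 0)"
      by (rule suminf_split_head[OF sm])
    then show ?thesis using sumS by (simp only: WP) (simp add: W_def)
  qed
  have B: "(\<Sum>n. W (- int n - 1)) = C * S" using sumS by (simp only: WN)
  have "(W has_sum (2 * Z + C * S + C * S)) UNIV"
    using int_has_sum_split[OF s1 s2] A B by simp
  then have "2 * Z + C * S + C * S = 0" using WS by (rule has_sum_unique)
  then show ?thesis by (simp add: Z_def C_def S_def Q_def algebra_simps)
qed


lemma one_le_from_sq: "1 \<le> x ^ 2 \<Longrightarrow> 0 \<le> x \<Longrightarrow> (1::real) \<le> x"
  using power2_le_imp_le[of 1 x] by simp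

lemma int_sq_pos: "(c, d) \<noteq> (0, 0) \<Longrightarrow> 1 \<le> (c::int)^2 + d^2"
proof -
  assume "(c, d) \<noteq> (0, 0)"
  then have "c \<noteq> 0 \<or> d \<noteq> 0" by auto
  moreover have "0 \<le> c^2" "0 \<le> d^2" by simp_all
  moreover have "c \<noteq> 0 \<Longrightarrow> 0 < c^2" "d \<noteq> 0 \<Longrightarrow> 0 < d^2" by simp_all
  ultimately show ?thesis by linarith
qed

lemma good_i: "good_pt \<i>"
  unfolding good_pt_def
proof (intro allI impI)
  fix c d :: int assume cd: "(c, d) \<noteq> (0, 0)"
  define N where "N = norm (of_int c * \<i> + of_int d)"
  have N2: "N ^ 2 = real_of_int (c^2 + d^2)"
  proof -
    have "N ^ 2 = (real_of_int d)^2 + (real_of_int c)^2"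
      unfolding N_def cmod_power2 by simp
    then show ?thesis by simp
  qed
  have "1 \<le> c^2 + d^2" by (rule int_sq_pos[OF cd])
  then have X: "(1::real) \<le> real_of_int (c^2 + d^2)" by (simp only: of_int_1_le_iff)
  then have "1 \<le> N ^ 2" unfolding N2 .
  then have N1: "1 \<le> N" by (rule one_le_from_sq) (simp add: N_def)
  have aux: "\<And>a::real. 1 \<le> a \<Longrightarrow> a \<le> 2 * a" by linarith
  have le: "real_of_int (c^2 + d^2) \<le> 2 * N ^ 2" unfolding N2 by (rule aux[OF X])
  show "1 \<le> norm (of_int c * \<i> + of_int d) \<and> real_of_int (c^2 + d^2) \<le> 2 * norm (of_int c * \<i> + of_int d) ^ 2"
    using N1 le unfolding N_def by (intro conjI)
qed

definition rho :: complex where "rho = Complex (-1/2) (sqrt 3 / 2)"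
lemma rho_Re: "Re rho = -1/2" by (simp add: rho_def)
lemma rho_Im': "Im rho = sqrt 3 / 2" by (simp add: rho_def)
lemma sqrt3_sq: "sqrt 3 * sqrt 3 = (3::real)" by simp
lemma rho_sq: "rho * rho = - rho - 1"
proof (rule complex_eqI)
  have "Re (rho * rho) = Re rho * Re rho - Im rho * Im rho" by simp
  also have "\<dots> = 1/4 - (sqrt 3 * sqrt 3) / 4" by (simp add: rho_Re rho_Im')
  also have "\<dots> = Re (- rho - 1)" by (simp add: sqrt3_sq rho_Re)
  finally show "Re (rho * rho) = Re (- rho - 1)" .
  have "Im (rho * rho) = Re rho * Im rho + Im rho * Re rho" by simp
  also have "\<dots> = Im (- rho - 1)" by (simp add: rho_Re rho_Im')
  finally show "Im (rho * rho) = Im (- rho - 1)" .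
qed
lemma rho_Im: "Im rho > 0" by (simp add: rho_Im')
lemma rho_ne1: "rho \<noteq> 1"
proof
  assume "rho = 1" then have "Re rho = 1" by simp
  then show False by (simp add: rho_Re)
qed
lemma rho_cube: "rho ^ 3 = 1"
proof -
  have "rho ^ 3 = rho * (rho * rho)" by (simp add: power3_eq_cube)
  also have "\<dots> = rho * (- rho - 1)" by (simp only: rho_sq)
  also have "\<dots> = - (rho * rho) - rho" by (simp add: algebra_simps)
  also have "\<dots> = 1" by (simp only: rho_sq) simp
  finally show ?thesis .
qed

lemma good_rho: "good_pt rho"
  unfolding good_pt_def
proof (intro allI impI)
  fix c d :: int assume cd: "(c, d) \<noteq> (0, 0)"
  define N where "N = norm (of_int c * rho + of_int d)"
  have N2: "N ^ 2 = real_of_int (c^2 - c * d + d^2)"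
  proof -
    define x where "x = real_of_int c"
    define y where "y = real_of_int d"
    have "N ^ 2 = (y - x / 2)^2 + (x * sqrt 3 / 2)^2"
      unfolding N_def cmod_power2 x_def y_def by (simp add: rho_def)
    also have "(x * sqrt 3 / 2)^2 = 3 * (x * x) / 4"
      by (simp add: power2_eq_square sqrt3_sq algebra_simps)
    also have "(y - x / 2)^2 = y * y - x * y + (x * x) / 4"
      by (simp add: power2_eq_square algebra_simps)
    also have "real_of_int (c^2 - c * d + d^2) = x * x - x * y + y * y"
      by (simp add: x_def y_def power2_eq_square)
    ultimately show ?thesis by simp
  qed
  have ci: "c^2 + d^2 \<le> 2 * (c^2 - c * d + d^2)"
  proof -
    have aux: "\<And>A B P::int. 0 \<le> A - 2 * P + B \<Longrightarrow> A + B \<le> 2 * (A - P + B)" by presburger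
    have "0 \<le> (c - d)^2" by simp
    moreover have "(c - d)^2 = c^2 - 2 * (c * d) + d^2" by (simp add: power2_eq_square algebra_simps)
    ultimately show ?thesis using aux[of "c^2" "c * d" "d^2"] by simp
  qed
  have "real_of_int (c^2 + d^2) \<le> real_of_int (2 * (c^2 - c * d + d^2))"
    using ci by (simp only: of_int_le_iff)
  then have le: "real_of_int (c^2 + d^2) \<le> 2 * N ^ 2" unfolding N2 by simp
  have "1 \<le> c^2 - c * d + d^2"
  proof -
    have "1 \<le> c^2 + d^2" by (rule int_sq_pos[OF cd])
    have aux: "\<And>A Q::int. 1 \<le> A \<Longrightarrow> A \<le> 2 * Q \<Longrightarrow> 1 \<le> Q" by presburger
    show ?thesis by (rule aux[OF \<open>1 \<le> c^2 + d^2\<close> ci])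
  qed
  then have "(1::real) \<le> real_of_int (c^2 - c * d + d^2)" by (simp only: of_int_1_le_iff)
  then have "1 \<le> N ^ 2" unfolding N2 .
  then have "1 \<le> N" by (rule one_le_from_sq) (simp add: N_def)
  then show "1 \<le> norm (of_int c * rho + of_int d) \<and> real_of_int (c^2 + d^2) \<le> 2 * norm (of_int c * rho + of_int d) ^ 2"
    using le unfolding N_def by (intro conjI)
qed

lemma T_zero_i: "((\<lambda>(c::int, d::int). inverse ((of_int c * \<i> + of_int d) ^ 6)) has_sum 0) UNIV"
proof (rule lattice_zero[OF good_i, of 6 "\<lambda>(c, d). (d, - c)" "-1"])
  show "bij (\<lambda>(c::int, d::int). (d, - c))"
    by (rule bij_betwI[of _ _ _ "\<lambda>(a, b). (- b, a)"]) auto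
  fix x :: "int \<times> int"
  obtain c d where x: "x = (c, d)" by (cases x)
  have "of_int d * \<i> + of_int (- c) = \<i> * (of_int c * \<i> + of_int d)"
    by (simp add: algebra_simps)
  moreover have "(\<i> * w) ^ 6 = - (w ^ 6)" for w :: complex
  proof -
    have "\<i> ^ 6 = (\<i> ^ 2) ^ 3" by (simp flip: power_mult)
    then have i6: "\<i> ^ 6 = -1" by simp
    show ?thesis by (simp add: power_mult_distrib i6)
  qed
  ultimately show "(\<lambda>(c, d). inverse ((of_int c * \<i> + of_int d) ^ 6)) ((\<lambda>(c, d). (d, - c)) x) =
          - 1 * (\<lambda>(c, d). inverse ((of_int c * \<i> + of_int d) ^ 6)) x"
    by (simp add: x)
qed auto

lemma T_zero_rho: "((\<lambda>(c::int, d::int). inverse ((of_int c * rho + of_int d) ^ 4)) has_sum 0) UNIV"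
proof (rule lattice_zero[OF good_rho, of 4 "\<lambda>(c, d). (d - c, - c)" "inverse rho"])
  show "bij (\<lambda>(c::int, d::int). (d - c, - c))"
    by (rule bij_betwI[of _ _ _ "\<lambda>(a, b). (- b, a - b)"]) auto
  show "inverse rho \<noteq> 1" using rho_ne1 by (metis inverse_1 inverse_inverse_eq)
  fix x :: "int \<times> int"
  obtain c d where x: "x = (c, d)" by (cases x)
  have "rho * (of_int c * rho + of_int d) = of_int c * (rho * rho) + of_int d * rho"
    by (simp add: algebra_simps)
  also have "\<dots> = of_int c * (- rho - 1) + of_int d * rho" by (simp only: rho_sq)
  also have "\<dots> = of_int (d - c) * rho + of_int (- c)" by (simp add: algebra_simps)
  finally have "of_int (d - c) * rho + of_int (- c) = rho * (of_int c * rho + of_int d)" by simp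
  moreover have "rho ^ 4 = rho" using rho_cube by (simp add: eval_nat_numeral)
  moreover have "inverse ((rho * w) ^ 4) = inverse rho * inverse (w ^ 4)" if "rho ^ 4 = rho" for w :: complex
    using that by (simp add: power_mult_distrib)
  ultimately show "(\<lambda>(c, d). inverse ((of_int c * rho + of_int d) ^ 4)) ((\<lambda>(c, d). (d - c, - c)) x) =
          inverse rho * (\<lambda>(c, d). inverse ((of_int c * rho + of_int d) ^ 4)) x"
    by (simp add: x)
qed auto

lemma eis6_i: "eis6 \<i> = 0"
proof -
  have E: "2 * (\<Sum>n. inverse ((1 + of_nat n) ^ Suc 5)) +
           2 * ((2 * of_real pi * \<i>) ^ Suc 5 / fact 5) * (\<Sum>n. of_nat (divsum 5 (Suc n)) * qvar \<i> ^ Suc n) = 0"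
  proof -
    have s6: "Suc 5 = (6::nat)" by simp
    have "odd (5::nat)" by simp
    from lattice_eval[of "\<i>" 5, unfolded s6, OF _ this T_zero_i] show ?thesis by (simp only: s6) simp
  qed
  define S where "S = (\<Sum>n. of_nat (divsum 5 (Suc n)) * qvar \<i> ^ Suc n)"
  have i6: "(2 * of_real pi * \<i>) ^ 6 = - 64 * (of_real pi) ^ 6"
    by (simp add: power_mult_distrib eval_nat_numeral)
  have f5: "(fact 5 :: complex) = 120" by (simp add: fact_numeral)
  have "2 * of_real (pi ^ 6 / 945) + 2 * (- 64 * (of_real pi) ^ 6 / 120) * S = 0"
    using E zeta6 unfolding S_def by (simp add: i6 f5)
  moreover have "(of_real pi ^ 6 * 2 / 945) * (1 - 504 * S) =
      2 * of_real (pi ^ 6 / 945) + 2 * (- 64 * (of_real pi) ^ 6 / 120) * S"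
    by (simp add: field_simps)
  ultimately have "(of_real pi ^ 6 * 2 / 945) * (1 - 504 * S) = 0" by simp
  then have "1 - 504 * S = 0" by simp
  then show ?thesis unfolding eis6_def S_def .
qed

lemma eis4_rho: "eis4 rho = 0"
proof -
  have E: "2 * (\<Sum>n. inverse ((1 + of_nat n) ^ Suc 3)) +
           2 * ((2 * of_real pi * \<i>) ^ Suc 3 / fact 3) * (\<Sum>n. of_nat (divsum 3 (Suc n)) * qvar rho ^ Suc n) = 0"
  proof -
    have s4: "Suc 3 = (4::nat)" by simp
    have "odd (3::nat)" by simp
    from lattice_eval[of rho 3, unfolded s4, OF rho_Im this T_zero_rho] show ?thesis by (simp only: s4)
  qed
  define S where "S = (\<Sum>n. of_nat (divsum 3 (Suc n)) * qvar rho ^ Suc n)"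
  have i4: "(2 * of_real pi * \<i>) ^ 4 = 16 * (of_real pi) ^ 4"
  proof -
    have "\<i> ^ 4 = (\<i> ^ 2) ^ 2" by (simp flip: power_mult)
    then have i4': "\<i> ^ 4 = 1" by simp
    show ?thesis by (simp add: power_mult_distrib i4')
  qed
  have f3: "(fact 3 :: complex) = 6" by (simp add: fact_numeral)
  have "2 * of_real (pi ^ 4 / 90) + 2 * (16 * (of_real pi) ^ 4 / 6) * S = 0"
    using E zeta4 unfolding S_def by (simp add: i4 f3)
  moreover have "(of_real pi ^ 4 / 45) * (1 + 240 * S) =
      2 * of_real (pi ^ 4 / 90) + 2 * (16 * (of_real pi) ^ 4 / 6) * S"
    by (simp add: field_simps)
  ultimately have "(of_real pi ^ 4 / 45) * (1 + 240 * S) = 0" by simp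
  then have "1 + 240 * S = 0" by simp
  then show ?thesis unfolding eis4_def S_def .
qed


lemma open_uhp: "open upper_half_plane"
  unfolding upper_half_plane_def by (rule open_halfspace_Im_gt)

lemma connected_uhp: "connected upper_half_plane"
  unfolding upper_half_plane_def by (rule connected_halfspace_Im_gt)

lemma divsum_bound: "real (divsum k (Suc n)) \<le> real (Suc n) ^ Suc k"
proof -
  define m where "m = Suc n"
  have "{d. d dvd m} \<subseteq> {1..m}"
  proof
    fix d assume "d \<in> {d. d dvd m}"
    then have dm: "d dvd m" by simp
    have m0: "m > 0" by (simp add: m_def)
    have "d \<le> m" using dm m0 by (rule dvd_imp_le)
    moreover have "d \<noteq> 0" using dm m0 by auto
    ultimately show "d \<in> {1..m}" by simp
  qed
  then have "divsum k m \<le> (\<Sum>d\<in>{1..m}. d ^ k)"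
    unfolding divsum_def by (intro sum_mono2) auto
  also have "\<dots> \<le> (\<Sum>d\<in>{1..m}. m ^ k)"
    by (intro sum_mono power_mono) auto
  also have "\<dots> = m * m ^ k" by simp
  finally have "divsum k m \<le> m ^ Suc k" by simp
  then have "real (divsum k m) \<le> real (m ^ Suc k)" by (simp only: of_nat_le_iff)
  then show ?thesis unfolding m_def by (metis of_nat_power)
qed

definition qser :: "(nat \<Rightarrow> complex) \<Rightarrow> complex \<Rightarrow> complex" where
  "qser a w = (\<Sum>n. a n * w ^ n)"

lemma qser_summable:
  fixes a :: "nat \<Rightarrow> complex" and w :: complex
  assumes "\<And>n. norm (a n) \<le> real (Suc n) ^ p" "norm w < 1"
  shows "summable (\<lambda>n. norm (a n * w ^ n))"
proof (rule summable_comparison_test[OF _ summable_Suc_pow_geom[of "norm w" p]])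
  have "norm (a n * w ^ n) \<le> real (Suc n) ^ p * norm w ^ n" for n
  proof -
    have "norm (a n * w ^ n) = norm (a n) * norm w ^ n" by (simp add: norm_mult norm_power)
    also have "\<dots> \<le> real (Suc n) ^ p * norm w ^ n" by (rule mult_right_mono[OF assms(1)]) simp
    finally show ?thesis .
  qed
  then show "\<exists>N. \<forall>n\<ge>N. norm (norm (a n * w ^ n)) \<le> real (Suc n) ^ p * norm w ^ n" by auto
qed (use assms in simp)

lemma qser_holo_ball:
  assumes "\<And>n. norm (a n) \<le> real (Suc n) ^ p"
  shows "qser a holomorphic_on ball 0 1"
proof -
  have "\<exists>f'. (qser a has_field_derivative f') (at w)" if "w \<in> ball 0 1" for w
  proof -
    have "((\<lambda>w. \<Sum>n. a n * w ^ n) has_field_derivative (\<Sum>n. diffs a n * w ^ n)) (at w)"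
      by (rule termdiffs_strong'[of 1])
         (use that in \<open>auto intro: summable_norm_cancel[OF qser_summable[OF assms]]\<close>)
    then show ?thesis unfolding qser_def[abs_def] by blast
  qed
  then show ?thesis by (subst holomorphic_on_open) auto
qed

lemma qser_eq:
  assumes "\<And>n. norm (a n) \<le> real (Suc n) ^ p" "Im z > 0"
  shows "(\<Sum>n. a n * qvar z ^ Suc n) = qvar z * qser a (qvar z)"
proof -
  have "summable (\<lambda>n. a n * qvar z ^ n)"
    by (rule summable_norm_cancel[OF qser_summable[OF assms(1) norm_qvar_lt1[OF assms(2)]]])
  then have "qvar z * qser a (qvar z) = (\<Sum>n. qvar z * (a n * qvar z ^ n))"
    unfolding qser_def by (rule suminf_mult[symmetric])
  then show ?thesis by (simp add: algebra_simps)
qed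

lemma qvar_holo: "qvar holomorphic_on S"
  unfolding qvar_def by (intro holomorphic_intros)

lemma qser_holo:
  assumes "\<And>n. norm (a n) \<le> real (Suc n) ^ p"
  shows "(\<lambda>z. \<Sum>n. a n * qvar z ^ Suc n) holomorphic_on upper_half_plane"
proof (rule holomorphic_transform)
  have "(qser a \<circ> qvar) holomorphic_on upper_half_plane"
    by (rule holomorphic_on_compose_gen[OF qvar_holo qser_holo_ball[OF assms]])
       (auto simp: upper_half_plane_def norm_qvar_lt1)
  then show "(\<lambda>z. qvar z * qser a (qvar z)) holomorphic_on upper_half_plane"
    by (intro holomorphic_intros qvar_holo) (simp add: o_def)
  show "qvar z * qser a (qvar z) = (\<Sum>n. a n * qvar z ^ Suc n)" if "z \<in> upper_half_plane" for z
    using qser_eq[OF assms, of z] that by (simp add: upper_half_plane_def)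
qed

lemma divsum_coeff_bound: "norm (of_nat (divsum k (Suc n)) :: complex) \<le> real (Suc n) ^ Suc k"
  using divsum_bound[of k n] by simp

lemma eis2_holo: "eis2 holomorphic_on upper_half_plane"
proof -
  have "(\<lambda>z. 1 - 24 * (\<Sum>n. of_nat (divsum 1 (Suc n)) * qvar z ^ Suc n)) holomorphic_on upper_half_plane"
    by (intro holomorphic_intros qser_holo[OF divsum_coeff_bound])
  then show ?thesis by (simp add: eis2_def[abs_def])
qed

lemma eis4_holo: "eis4 holomorphic_on upper_half_plane"
proof -
  have "(\<lambda>z. 1 + 240 * (\<Sum>n. of_nat (divsum 3 (Suc n)) * qvar z ^ Suc n)) holomorphic_on upper_half_plane"
    by (intro holomorphic_intros qser_holo[OF divsum_coeff_bound])
  then show ?thesis by (simp add: eis4_def[abs_def])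
qed

lemma eis6_holo: "eis6 holomorphic_on upper_half_plane"
proof -
  have "(\<lambda>z. 1 - 504 * (\<Sum>n. of_nat (divsum 5 (Suc n)) * qvar z ^ Suc n)) holomorphic_on upper_half_plane"
    by (intro holomorphic_intros qser_holo[OF divsum_coeff_bound])
  then show ?thesis by (simp add: eis6_def[abs_def])
qed

lemma qser_small:
  assumes "\<And>n. norm (a n) \<le> real (Suc n) ^ p" "e > 0"
  shows "eventually (\<lambda>t. norm (\<Sum>n. a n * qvar (\<i> * of_real t) ^ Suc n) < e) at_top"
proof -
  have "continuous_on (ball 0 1) (qser a)"
    by (rule holomorphic_on_imp_continuous_on[OF qser_holo_ball[OF assms(1)]])
  then have "isCont (qser a) 0"
    by (rule continuous_on_interior) auto
  then have "isCont (\<lambda>w. w * qser a w) 0" by (intro continuous_intros)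
  then obtain d where d: "d > 0" "\<And>w. dist w 0 < d \<Longrightarrow> dist (w * qser a w) (0 * qser a 0) < e"
    unfolding continuous_at_eps_delta using assms(2) by blast
  have "((\<lambda>t. exp (- 2 * pi * t)) \<longlongrightarrow> 0) at_top" by real_asymp
  then have ev1: "eventually (\<lambda>t. exp (- 2 * pi * t) < d) at_top"
    using d(1) by (rule order_tendstoD(2))
  have ev2: "eventually (\<lambda>t::real. t > 0) at_top" by (rule eventually_gt_at_top)
  show ?thesis using ev1 ev2
  proof eventually_elim
    case (elim t)
    define z where "z = \<i> * of_real t"
    have z: "Im z > 0" using elim by (simp add: z_def)
    have "norm (qvar z) = exp (- 2 * pi * t)" by (simp add: norm_qvar z_def)
    then have "dist (qvar z) 0 < d" using elim by simp
    then have "norm (qvar z * qser a (qvar z)) < e" using d(2) by simp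
    then show ?case using qser_eq[OF assms(1) z] by (simp add: z_def)
  qed
qed

lemma exists_nonzero: "\<exists>z\<in>upper_half_plane. eis4 z \<noteq> 0 \<and> eis6 z \<noteq> 0"
proof -
  have e4: "eventually (\<lambda>t. norm (\<Sum>n. of_nat (divsum 3 (Suc n)) * qvar (\<i> * of_real t) ^ Suc n) < 1/240) at_top"
    by (rule qser_small[OF divsum_coeff_bound]) simp
  have e6: "eventually (\<lambda>t. norm (\<Sum>n. of_nat (divsum 5 (Suc n)) * qvar (\<i> * of_real t) ^ Suc n) < 1/504) at_top"
    by (rule qser_small[OF divsum_coeff_bound]) simp
  have ev: "eventually (\<lambda>t::real. t > 0) at_top" by (rule eventually_gt_at_top)
  from eventually_happens'[OF _ eventually_conj[OF ev eventually_conj[OF e4 e6]]]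
  obtain t :: real where t: "t > 0"
    "norm (\<Sum>n. of_nat (divsum 3 (Suc n)) * qvar (\<i> * of_real t) ^ Suc n) < 1/240"
    "norm (\<Sum>n. of_nat (divsum 5 (Suc n)) * qvar (\<i> * of_real t) ^ Suc n) < 1/504"
    by auto
  define z where "z = \<i> * of_real t"
  have "z \<in> upper_half_plane" using t by (simp add: z_def upper_half_plane_def)
  moreover have "eis4 z \<noteq> 0"
  proof
    assume "eis4 z = 0"
    then have "240 * (\<Sum>n. of_nat (divsum 3 (Suc n)) * qvar z ^ Suc n) = -1"
      unfolding eis4_def by (simp add: add_eq_0_iff)
    then have "norm (240 * (\<Sum>n. of_nat (divsum 3 (Suc n)) * qvar z ^ Suc n)) = 1" by simp
    then show False using t(2) by (simp add: z_def norm_mult)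
  qed
  moreover have "eis6 z \<noteq> 0"
  proof
    assume "eis6 z = 0"
    then have "504 * (\<Sum>n. of_nat (divsum 5 (Suc n)) * qvar z ^ Suc n) = 1"
      unfolding eis6_def by simp
    then have "norm (504 * (\<Sum>n. of_nat (divsum 5 (Suc n)) * qvar z ^ Suc n)) = 1" by simp
    then show False using t(3) by (simp add: z_def norm_mult)
  qed
  ultimately show ?thesis by blast
qed


lemma D_step:
  fixes F H0 :: "complex \<Rightarrow> complex" and k :: real
  assumes r: "ball p r \<subseteq> upper_half_plane" and H0: "H0 holomorphic_on ball p r"
    and F: "\<And>z. z \<in> ball p r \<Longrightarrow> F z = (z - p) ^ Suc s * H0 z"
  shows "\<exists>H1. H1 holomorphic_on ball p r \<and>
           (\<forall>z\<in>ball p r. serre_D k F z = (z - p) ^ s * H1 z) \<and>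
           H1 p = of_nat (Suc s) * H0 p / (2 * of_real pi * \<i>)"
proof -
  define c where "c = 2 * of_real pi * \<i>"
  define H1 where "H1 = (\<lambda>z. (of_nat (Suc s) * H0 z + (z - p) * deriv H0 z) / c
                          - of_real k / 12 * eis2 z * (z - p) * H0 z)"
  have c0: "c \<noteq> 0" by (simp add: c_def)
  have hol: "H1 holomorphic_on ball p r"
  proof -
    have "eis2 holomorphic_on ball p r" using eis2_holo r by (rule holomorphic_on_subset)
    moreover have "deriv H0 holomorphic_on ball p r" using H0 by (intro holomorphic_deriv) auto
    ultimately show ?thesis unfolding H1_def using H0 by (intro holomorphic_intros) (simp_all add: c0)
  qed
  have eq: "serre_D k F z = (z - p) ^ s * H1 z" if z: "z \<in> ball p r" for z
  proof -
    have dH: "(H0 has_field_derivative deriv H0 z) (at z)"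
      using holomorphic_derivI[OF H0 open_ball z] .
    have dG: "((\<lambda>w. (w - p) ^ Suc s * H0 w) has_field_derivative
              (of_nat (Suc s) * (z - p) ^ s * H0 z + (z - p) ^ Suc s * deriv H0 z)) (at z)"
    proof -
      have dL: "((\<lambda>w. w - p) has_field_derivative (1 - 0)) (at z)"
        by (intro DERIV_diff DERIV_ident DERIV_const)
      have dP: "((\<lambda>w. (w - p) ^ Suc s) has_field_derivative (1 + of_nat s) * ((1 - 0) * (z - p) ^ s)) (at z)"
        by (rule DERIV_power_Suc[OF dL])
      show ?thesis by (rule DERIV_cong[OF DERIV_mult[OF dP dH]]) simp
    qed
    have dF: "(F has_field_derivative
              (of_nat (Suc s) * (z - p) ^ s * H0 z + (z - p) ^ Suc s * deriv H0 z)) (at z)"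
      by (rule has_field_derivative_transform_within_open[OF dG open_ball z]) (simp add: F)
    have dFz: "deriv F z = of_nat (Suc s) * (z - p) ^ s * H0 z + (z - p) ^ Suc s * deriv H0 z"
      by (rule DERIV_imp_deriv[OF dF])
    show ?thesis
      unfolding serre_D_def mderiv_def H1_def F[OF z] c_def[symmetric] dFz using c0
      by (simp add: field_simps)
  qed
  have "H1 p = of_nat (Suc s) * H0 p / c" by (simp add: H1_def)
  then show ?thesis using hol eq by (auto simp: c_def)
qed

lemma iter_exact:
  fixes f H0 :: "complex \<Rightarrow> complex" and k :: real
  assumes r: "ball p r \<subseteq> upper_half_plane" and H0: "H0 holomorphic_on ball p r"
    and f: "\<And>z. z \<in> ball p r \<Longrightarrow> f z = (z - p) ^ R * H0 z" and H0p: "H0 p \<noteq> 0"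
  shows "j \<le> R \<Longrightarrow> \<exists>Hj. Hj holomorphic_on ball p r \<and>
           (\<forall>z\<in>ball p r. serre_iter k j f z = (z - p) ^ (R - j) * Hj z) \<and> Hj p \<noteq> 0"
proof (induction j)
  case 0
  then show ?case using H0 f H0p by (intro exI[of _ H0]) auto
next
  case (Suc j)
  then obtain Hj where Hj: "Hj holomorphic_on ball p r"
    "\<And>z. z \<in> ball p r \<Longrightarrow> serre_iter k j f z = (z - p) ^ (R - j) * Hj z" "Hj p \<noteq> 0"
    by auto
  have e: "R - j = Suc (R - Suc j)" using Suc.prems by simp
  obtain H1 where H1: "H1 holomorphic_on ball p r"
    "\<forall>z\<in>ball p r. serre_D (k + 2 * real j) (serre_iter k j f) z = (z - p) ^ (R - Suc j) * H1 z"
    "H1 p = of_nat (Suc (R - Suc j)) * Hj p / (2 * of_real pi * \<i>)"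
    using D_step[OF r Hj(1), of "serre_iter k j f" "R - Suc j" "k + 2 * real j"] Hj(2) e by auto
  have nz: "(of_nat (Suc (R - Suc j)) :: complex) \<noteq> 0" by (rule of_nat_neq_0)
  have "H1 p \<noteq> 0" using H1(3) Hj(3) nz by (simp del: of_nat_Suc)
  then show ?case using H1 by (intro exI[of _ H1]) auto
qed

lemma vanish_at_center:
  fixes \<Phi> :: "complex \<Rightarrow> complex"
  assumes "\<Phi> holomorphic_on ball p r" "r > 0" "\<And>z. z \<in> ball p r \<Longrightarrow> z \<noteq> p \<Longrightarrow> \<Phi> z = 0"
  shows "\<Phi> p = 0"
proof -
  have "continuous_on (ball p r) \<Phi>" by (rule holomorphic_on_imp_continuous_on[OF assms(1)])
  then have "isCont \<Phi> p" using assms(2) by (intro continuous_on_interior) auto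
  then have l1: "(\<Phi> \<longlongrightarrow> \<Phi> p) (at p)" by (simp add: isCont_def)
  have "eventually (\<lambda>z. z \<in> ball p r) (at p)"
    using assms(2) by (intro eventually_at_in_open') auto
  then have "eventually (\<lambda>z. \<Phi> z = 0) (at p)"
    unfolding eventually_at_filter by eventually_elim (use assms(3) in auto)
  then have l2: "(\<Phi> \<longlongrightarrow> 0) (at p)" by (rule tendsto_eventually)
  show ?thesis using tendsto_unique[OF _ l1 l2] by simp
qed


lemma order_ge:
  fixes E G f :: "complex \<Rightarrow> complex"
  assumes E: "E holomorphic_on upper_half_plane" and G: "G holomorphic_on upper_half_plane"
    and p: "p \<in> upper_half_plane" and Ep: "E p = 0"
    and f: "\<And>z. f z = E z ^ M * G z"
    and z0: "z0 \<in> upper_half_plane" "f z0 \<noteq> 0"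
    and M: "M > 0"
  obtains R r H0 where "M \<le> R" "r > 0" "ball p r \<subseteq> upper_half_plane" "H0 holomorphic_on ball p r"
    "\<And>z. z \<in> ball p r \<Longrightarrow> f z = (z - p) ^ R * H0 z" "H0 p \<noteq> 0"
proof -
  have fh: "f holomorphic_on upper_half_plane"
  proof (rule holomorphic_transform)
    show "(\<lambda>z. E z ^ M * G z) holomorphic_on upper_half_plane" using E G by (intro holomorphic_intros)
  qed (simp add: f)
  have fp: "f p = 0" using Ep M by (simp add: f power_0_left)
  have nc: "\<not> f constant_on upper_half_plane"
  proof
    assume "f constant_on upper_half_plane"
    then obtain c where "\<forall>z\<in>upper_half_plane. f z = c" by (auto simp: constant_on_def)
    then have "f z0 = f p" using z0(1) p by auto
    then show False using z0(2) fp by simp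
  qed
  obtain g r n where gn: "0 < n" "0 < r" "ball p r \<subseteq> upper_half_plane" "g holomorphic_on ball p r"
    "\<And>w. w \<in> ball p r \<Longrightarrow> f w = (w - p) ^ n * g w" "\<And>w. w \<in> ball p r \<Longrightarrow> g w \<noteq> 0"
    by (rule holomorphic_factor_zero_nonconstant[OF fh open_uhp connected_uhp p fp nc]) blast
  define E1 where "E1 = (\<lambda>z. if z = p then deriv E p else (E z - E p) / (z - p))"
  have E1h: "E1 holomorphic_on upper_half_plane"
    unfolding E1_def by (rule pole_lemma[OF E]) (simp add: interior_open[OF open_uhp] p)
  have Efac: "E z = (z - p) * E1 z" for z
    by (cases "z = p") (simp_all add: E1_def Ep)
  define K where "K = (\<lambda>z. E1 z ^ M * G z)"
  have Kh: "K holomorphic_on ball p r"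
    unfolding K_def using holomorphic_on_subset[OF E1h gn(3)] holomorphic_on_subset[OF G gn(3)]
    by (intro holomorphic_intros) auto
  have fK: "f z = (z - p) ^ M * K z" for z
    by (simp add: f Efac K_def power_mult_distrib)
  have "M \<le> n"
  proof (rule ccontr)
    assume "\<not> M \<le> n"
    then have nM: "n < M" by simp
    define \<Phi> where "\<Phi> = (\<lambda>w. g w - (w - p) ^ (M - n) * K w)"
    have \<Phi>h: "\<Phi> holomorphic_on ball p r"
      unfolding \<Phi>_def using gn(4) Kh by (intro holomorphic_intros)
    have "\<Phi> w = 0" if w: "w \<in> ball p r" "w \<noteq> p" for w
    proof -
      have "(w - p) ^ n * g w = (w - p) ^ M * K w" using gn(5)[OF w(1)] fK[of w] by simp
      also have "(w - p) ^ M = (w - p) ^ n * (w - p) ^ (M - n)"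
        using nM by (simp flip: power_add)
      finally have "(w - p) ^ n * g w = (w - p) ^ n * ((w - p) ^ (M - n) * K w)" by simp
      moreover have "(w - p) ^ n \<noteq> 0" using w(2) by simp
      ultimately show ?thesis unfolding \<Phi>_def using w(2) by simp
    qed
    then have "\<Phi> p = 0" by (intro vanish_at_center[OF \<Phi>h gn(2)])
    moreover have "\<Phi> p = g p" using nM by (simp add: \<Phi>_def)
    moreover have "g p \<noteq> 0" using gn(6) gn(2) by simp
    ultimately show False by simp
  qed
  then show ?thesis using that[of n r g] gn by auto
qed

lemma main_core:
  fixes E G f :: "complex \<Rightarrow> complex" and g :: "nat \<Rightarrow> complex \<Rightarrow> complex" and k :: real
  assumes E: "E holomorphic_on upper_half_plane" and G: "G holomorphic_on upper_half_plane"
    and p: "p \<in> upper_half_plane" and Ep: "E p = 0"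
    and f: "\<And>z. f z = E z ^ M * G z"
    and z0: "z0 \<in> upper_half_plane" "f z0 \<noteq> 0"
    and N: "0 < N" "N \<le> M"
    and gi: "\<And>i. i \<in> {1..N} \<Longrightarrow> g i holomorphic_on upper_half_plane"
    and eqn: "\<And>z. z \<in> upper_half_plane \<Longrightarrow>
                serre_iter k N f z + (\<Sum>i=1..N. g i z * serre_iter k (N - i) f z) = 0"
  shows False
proof -
  have M: "M > 0" using N by simp
  obtain R r H0 where R: "M \<le> R" "r > 0" "ball p r \<subseteq> upper_half_plane" "H0 holomorphic_on ball p r"
    "\<And>z. z \<in> ball p r \<Longrightarrow> f z = (z - p) ^ R * H0 z" "H0 p \<noteq> 0"
    by (rule order_ge[OF E G p Ep f z0 M]) blast
  have "\<forall>j. \<exists>Hj. j \<le> R \<longrightarrow> (Hj holomorphic_on ball p r \<and>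
           (\<forall>z\<in>ball p r. serre_iter k j f z = (z - p) ^ (R - j) * Hj z) \<and> Hj p \<noteq> 0)"
    using iter_exact[OF R(3,4) R(5) R(6)] by blast
  then obtain HH where HH: "\<And>j. j \<le> R \<Longrightarrow> HH j holomorphic_on ball p r"
    "\<And>j z. j \<le> R \<Longrightarrow> z \<in> ball p r \<Longrightarrow> serre_iter k j f z = (z - p) ^ (R - j) * HH j z"
    "\<And>j. j \<le> R \<Longrightarrow> HH j p \<noteq> 0"
    by metis
  have NR: "N \<le> R" using N R(1) by simp
  define \<Phi> where "\<Phi> = (\<lambda>z. HH N z + (\<Sum>i=1..N. g i z * (z - p) ^ i * HH (N - i) z))"
  have \<Phi>h: "\<Phi> holomorphic_on ball p r"
  proof -
    have hs: "(\<lambda>z. g i z * (z - p) ^ i * HH (N - i) z) holomorphic_on ball p r" if "i \<in> {1..N}" for i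
      using holomorphic_on_subset[OF gi[OF that] R(3)] HH(1)[of "N - i"] NR
      by (intro holomorphic_intros) auto
    show ?thesis unfolding \<Phi>_def
      by (rule holomorphic_on_add[OF HH(1)[OF NR] holomorphic_on_sum]) (use hs in auto)
  qed
  have \<Phi>0: "\<Phi> z = 0" if z: "z \<in> ball p r" "z \<noteq> p" for z
  proof -
    have zH: "z \<in> upper_half_plane" using z R(3) by auto
    have "(\<Sum>i=1..N. g i z * serre_iter k (N - i) f z)
        = (\<Sum>i=1..N. (z - p) ^ (R - N) * (g i z * (z - p) ^ i * HH (N - i) z))"
    proof (rule sum.cong)
      fix i assume i: "i \<in> {1..N}"
      have e: "R - (N - i) = (R - N) + i" using i NR by auto
      have s: "serre_iter k (N - i) f z = (z - p) ^ ((R - N) + i) * HH (N - i) z"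
        using HH(2)[of "N - i" z] NR z(1) unfolding e by simp
      show "g i z * serre_iter k (N - i) f z = (z - p) ^ (R - N) * (g i z * (z - p) ^ i * HH (N - i) z)"
        by (simp only: s power_add) (simp add: algebra_simps)
    qed simp
    also have "\<dots> = (z - p) ^ (R - N) * (\<Sum>i=1..N. g i z * (z - p) ^ i * HH (N - i) z)"
      by (simp add: sum_distrib_left)
    finally have "0 = (z - p) ^ (R - N) * HH N z + (z - p) ^ (R - N) * (\<Sum>i=1..N. g i z * (z - p) ^ i * HH (N - i) z)"
      using eqn[OF zH] HH(2)[OF NR z(1)] by simp
    then have "(z - p) ^ (R - N) * \<Phi> z = 0" unfolding \<Phi>_def by (simp add: algebra_simps)
    moreover have "(z - p) ^ (R - N) \<noteq> 0" using z(2) by simp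
    ultimately show ?thesis using z(2) by simp
  qed
  have "\<Phi> p = 0" by (rule vanish_at_center[OF \<Phi>h R(2)]) (use \<Phi>0 in auto)
  moreover have "\<Phi> p = HH N p"
  proof -
    have "(\<Sum>i=1..N. g i p * (p - p) ^ i * HH (N - i) p) = 0"
      by (rule sum.neutral) auto
    then show ?thesis by (simp add: \<Phi>_def)
  qed
  ultimately show False using HH(3)[OF NR] by simp
qed

theorem theorem6p2:
  fixes m n N :: nat
  assumes "N > 0"
    and "satisfies_monic_MLDE (real (4 * m + 6 * n)) N (\<lambda>z. eis4 z ^ m * eis6 z ^ n)"
  shows "N \<ge> max m n + 1"
proof (rule ccontr)
  assume "\<not> N \<ge> max m n + 1"
  then have Nle: "N \<le> max m n" by simp
  define f where "f = (\<lambda>z. eis4 z ^ m * eis6 z ^ n)"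
  define k where "k = real (4 * m + 6 * n)"
  obtain g :: "nat \<Rightarrow> complex \<Rightarrow> complex" where
    gi: "\<forall>i\<in>{1..N}. g i \<in> modular_forms (2 * int i)" and
    eqn: "\<forall>z\<in>upper_half_plane. serre_iter k N f z + (\<Sum>i=1..N. g i z * serre_iter k (N - i) f z) = 0"
    using assms(2) unfolding satisfies_monic_MLDE_def f_def k_def by blast
  have gh: "g i holomorphic_on upper_half_plane" if "i \<in> {1..N}" for i
    using gi that by (auto simp: modular_forms_def)
  obtain z0 where z0: "z0 \<in> upper_half_plane" "eis4 z0 \<noteq> 0" "eis6 z0 \<noteq> 0"
    using exists_nonzero by blast
  have fz0: "f z0 \<noteq> 0" using z0 by (simp add: f_def)
  show False
  proof (cases "n \<le> m")
    case True
    then have NM: "N \<le> m" using Nle by simp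
    show False
    proof (rule main_core[where E = eis4 and G = "\<lambda>z. eis6 z ^ n" and p = rho and f = f and M = m and N = N and g = g and k = k])
      show "eis4 holomorphic_on upper_half_plane" by (rule eis4_holo)
      show "(\<lambda>z. eis6 z ^ n) holomorphic_on upper_half_plane" using eis6_holo by (intro holomorphic_intros)
      show "rho \<in> upper_half_plane" using rho_Im by (simp add: upper_half_plane_def)
      show "eis4 rho = 0" by (rule eis4_rho)
      show "f z = eis4 z ^ m * eis6 z ^ n" for z by (simp add: f_def)
    qed (use z0 fz0 assms(1) NM gh eqn in auto)
  next
    case False
    then have NM: "N \<le> n" using Nle by simp
    show False
    proof (rule main_core[where E = eis6 and G = "\<lambda>z. eis4 z ^ m" and p = "\<i>" and f = f and M = n and N = N and g = g and k = k])
      show "eis6 holomorphic_on upper_half_plane" by (rule eis6_holo)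
      show "(\<lambda>z. eis4 z ^ m) holomorphic_on upper_half_plane" using eis4_holo by (intro holomorphic_intros)
      show "\<i> \<in> upper_half_plane" by (simp add: upper_half_plane_def)
      show "eis6 \<i> = 0" by (rule eis6_i)
      show "f z = eis6 z ^ n * eis4 z ^ m" for z by (simp add: f_def mult.commute)
    qed (use z0 fz0 assms(1) NM gh eqn in auto)
  qed
qed


end
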